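(* Let $H$ be a distribution function on $\mathbb{R}^p$ and $\dot\mu_\theta:\mathbb{R}^p\to\mathbb{R}^q$ with coordinates in $L_2(\mathbb{R}^p,H)$ and $C_\theta=\int\dot\mu_\theta\dot\mu_\theta^TdH$ positive definite. Let $\{A_z:z\in\mathbb{R}\}$ be a scanning family, and assume $\mathcal{C}_z=\int_{A_z^c}\dot\mu_\theta\dot\mu_\theta^TdH$ is nonsingular for all $-\infty<z<\infty$. Let $\mathcal{G}=\{\gamma\in L_2(\mathbb{R}^p,H):\int\gamma\dot\mu_\theta\,dH=0\}$. Then the transformation $\mathcal{K}$ is a norm-preserving transformation from $L_2(\mathbb{R}^p,H)$ into $\mathcal{G}$: $\mathcal{K}\gamma\perp\dot\mu_\theta$ and $\int(\mathcal{K}\gamma)^2dH=\int\gamma^2dH$. Consequently, for any fixed $\varphi\in L_2(\mathbb{R},F)$, the process $w(\gamma,\varphi)=\tilde\xi(\mathcal{K}\gamma,\varphi)$ is a function-parametric Brownian motion in $\gamma\in L_2(\mathbb{R}^p,H)$, i.e., a zero-mean Gaussian process with covariance $Ew(\gamma_1,\varphi)w(\gamma_2,\varphi)=\int\gamma_1\gamma_2dH\int\varphi^2dF$.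
   Context: A scanning family is a family of measurable sets $A_z\subset\mathbb{R}^p$, $z\in\mathbb{R}$, with $A_z\subseteq A_{z'}$ for $z\le z'$, $H(A_{-\infty})=0$, $H(A_\infty)=1$, and $z\mapsto H(A_z)$ strictly increasing and absolutely continuous. $B^c$ is the complement of $B$, $z(x)=\inf\{z:A_z\ni x\}$, $\mathcal{T}\gamma(x)=\int_{A_{z(x)}}\gamma(y)\dot\mu_\theta^T(y)\mathcal{C}_{z(y)}^{-1}dH(y)\,\dot\mu_\theta(x)$, and $\mathcal{K}\gamma=\gamma-\mathcal{T}\gamma$. $F$ is a distribution function on $\mathbb{R}$. $b$ is the zero-mean Gaussian process indexed by pairs $(\gamma,\varphi)\in L_2(\mathbb{R}^p,H)\times L_2(\mathbb{R},F)$, bilinear, with $Eb(\gamma_1,\varphi_1)b(\gamma_2,\varphi_2)=\int\gamma_1\gamma_2dH\int\varphi_1\varphi_2dF$. $\tilde\xi(\gamma,\varphi)=b(\gamma_\perp,\varphi)$ where $\gamma_\perp=\gamma-\int\gamma\dot\mu_\theta^TdH\,C_\theta^{-1}\dot\mu_\theta$. *)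

theory Defs
  imports "HOL-Analysis.Analysis" "HOL-Probability.Probability"
begin

definition L2 :: "'a measure \<Rightarrow> ('a \<Rightarrow> real) \<Rightarrow> bool" where
  "L2 M g \<longleftrightarrow> g \<in> borel_measurable M \<and> integrable M (\<lambda>x. (g x)\<^sup>2)"

definition abs_continuous_real :: "(real \<Rightarrow> real) \<Rightarrow> bool" where
  "abs_continuous_real f \<longleftrightarrow>
     (\<forall>\<epsilon>>0. \<exists>\<delta>>0. \<forall>(n::nat) (a::nat \<Rightarrow> real) b.
        (\<forall>i<n. a i \<le> b i) \<and>
        (\<forall>i<n. \<forall>j<n. i \<noteq> j \<longrightarrow> b i \<le> a j \<or> b j \<le> a i) \<and>
        (\<Sum>i<n. b i - a i) < \<delta>
        \<longrightarrow> (\<Sum>i<n. \<bar>f (b i) - f (a i)\<bar>) < \<epsilon>)"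

text \<open>A_{-infinity} and A_{infinity} are read as the intersection and the union of the family.\<close>

definition scanning_family :: "'a measure \<Rightarrow> (real \<Rightarrow> 'a set) \<Rightarrow> bool" where
  "scanning_family H A \<longleftrightarrow>
     (\<forall>z. A z \<in> sets H) \<and>
     (\<forall>z z'. z \<le> z' \<longrightarrow> A z \<subseteq> A z') \<and>
     measure H (\<Inter>z. A z) = 0 \<and>
     measure H (\<Union>z. A z) = 1 \<and>
     strict_mono (\<lambda>z. measure H (A z)) \<and>
     abs_continuous_real (\<lambda>z. measure H (A z))"

definition Aext :: "(real \<Rightarrow> 'a set) \<Rightarrow> ereal \<Rightarrow> 'a set" where
  "Aext A e = (if e = \<infinity> then (\<Union>z. A z) else if e = -\<infinity> then (\<Inter>z. A z)
               else A (real_of_ereal e))"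

definition zx :: "(real \<Rightarrow> 'a set) \<Rightarrow> 'a \<Rightarrow> ereal" where
  "zx A x = Inf {ereal z | z. x \<in> A z}"

definition Ctheta :: "('a::euclidean_space) measure \<Rightarrow> ('a \<Rightarrow> real^'q) \<Rightarrow> real^'q^'q" where
  "Ctheta H mu = (\<chi> i j. LINT y|H. mu y $ i * mu y $ j)"

definition Cz :: "('a::euclidean_space) measure \<Rightarrow> ('a \<Rightarrow> real^'q) \<Rightarrow> (real \<Rightarrow> 'a set)
                   \<Rightarrow> ereal \<Rightarrow> real^'q^'q" where
  "Cz H mu A e = (\<chi> i j. LINT y:(- Aext A e)|H. mu y $ i * mu y $ j)"

definition pos_def_matrix :: "real^'q^'q \<Rightarrow> bool" where
  "pos_def_matrix C \<longleftrightarrow> (\<forall>v. v \<noteq> 0 \<longrightarrow> v \<bullet> (C *v v) > 0)"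

definition Top :: "('a::euclidean_space) measure \<Rightarrow> ('a \<Rightarrow> real^'q) \<Rightarrow> (real \<Rightarrow> 'a set)
                    \<Rightarrow> ('a \<Rightarrow> real) \<Rightarrow> 'a \<Rightarrow> real" where
  "Top H mu A g x =
     (LINT y:Aext A (zx A x)|H. g y *\<^sub>R (mu y v* matrix_inv (Cz H mu A (zx A y)))) \<bullet> mu x"

definition Kop :: "('a::euclidean_space) measure \<Rightarrow> ('a \<Rightarrow> real^'q) \<Rightarrow> (real \<Rightarrow> 'a set)
                    \<Rightarrow> ('a \<Rightarrow> real) \<Rightarrow> 'a \<Rightarrow> real" where
  "Kop H mu A g x = g x - Top H mu A g x"

definition gperp :: "('a::euclidean_space) measure \<Rightarrow> ('a \<Rightarrow> real^'q) \<Rightarrow> ('a \<Rightarrow> real) \<Rightarrow> 'a \<Rightarrow> real" where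
  "gperp H mu g x = g x - ((LINT y|H. g y *\<^sub>R mu y) v* matrix_inv (Ctheta H mu)) \<bullet> mu x"

definition centered_gaussian_rv :: "'w measure \<Rightarrow> ('w \<Rightarrow> real) \<Rightarrow> bool" where
  "centered_gaussian_rv M X \<longleftrightarrow> X \<in> borel_measurable M \<and>
     ((AE w in M. X w = 0) \<or> (\<exists>\<sigma>>0. distributed M lborel X (normal_density 0 \<sigma>)))"

definition centered_gaussian_process :: "'w measure \<Rightarrow> 't set \<Rightarrow> ('t \<Rightarrow> 'w \<Rightarrow> real) \<Rightarrow> bool" where
  "centered_gaussian_process M T X \<longleftrightarrow>
     (\<forall>S c. finite S \<longrightarrow> S \<subseteq> T \<longrightarrow> centered_gaussian_rv M (\<lambda>w. \<Sum>t\<in>S. c t * X t w))"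

end

theory Submission
  imports Defs
begin


locale kh =
  fixes H :: "(real^'p) measure"
    and mu :: "real^'p \<Rightarrow> real^'q"
    and A :: "real \<Rightarrow> (real^'p) set"
  assumes H_prob: "prob_space H" and H_borel: "sets H = sets borel"
    and mu_L2: "\<forall>i. L2 H (\<lambda>x. mu x $ i)"
    and Ctheta_pd: "pos_def_matrix (Ctheta H mu)"
    and scan: "scanning_family H A"
    and Cz_nonsing: "\<forall>z::real. invertible (Cz H mu A (ereal z))"
begin

interpretation P: prob_space H by (rule H_prob)

abbreviation zz where "zz \<equiv> zx A"

lemma space_H[simp]: "space H = UNIV"
  using H_borel sets_eq_imp_space_eq by fastforce

lemma meas_H: "borel_measurable H = borel_measurable borel"
  by (rule measurable_cong_sets) (auto simp: H_borel)

lemma A_sets[measurable]: "A z \<in> sets H"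
  using scan unfolding scanning_family_def by auto

lemma A_mono: "z \<le> z' \<Longrightarrow> A z \<subseteq> A z'"
  using scan unfolding scanning_family_def by auto

lemma zz_le: "x \<in> A z \<Longrightarrow> zz x \<le> ereal z"
  unfolding zx_def by (rule Inf_lower) auto

lemma zz_less: "zz x < ereal z \<Longrightarrow> x \<in> A z"
proof -
  assume "zz x < ereal z"
  then obtain z' where "x \<in> A z'" "ereal z' < ereal z"
    unfolding zx_def Inf_less_iff by auto
  then show ?thesis using A_mono[of z' z] by auto
qed

lemma zz_inf_iff: "zz x = \<infinity> \<longleftrightarrow> x \<notin> (\<Union>z. A z)"
proof
  assume "zz x = \<infinity>" then show "x \<notin> (\<Union>z. A z)" using zz_le by fastforce
next
  assume "x \<notin> (\<Union>z. A z)"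
  then have "{ereal z |z. x \<in> A z} = {}" by auto
  then show "zz x = \<infinity>" unfolding zx_def by (simp add: top_ereal_def)
qed

lemma zz_minf_iff: "zz x = -\<infinity> \<longleftrightarrow> x \<in> (\<Inter>z. A z)"
proof
  assume "zz x = -\<infinity>" then show "x \<in> (\<Inter>z. A z)" using zz_less by auto
next
  assume "x \<in> (\<Inter>z. A z)"
  then have "\<forall>z. zz x \<le> ereal z" using zz_le by auto
  then show "zz x = -\<infinity>"
  proof (cases "zz x")
    case (real r) then show ?thesis using \<open>\<forall>z. zz x \<le> ereal z\<close>[rule_format, of "r - 1"] by auto
  next
    case PInf then show ?thesis using \<open>\<forall>z. zz x \<le> ereal z\<close>[rule_format, of 0] by auto
  qed auto
qed

lemma Union_A: "(\<Union>z. A z) = (\<Union>n::nat. A (real n))"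
proof -
  have "x \<in> (\<Union>n::nat. A (real n))" if "x \<in> A z" for x z
  proof -
    obtain n::nat where "z \<le> real n" using real_arch_simple by blast
    then show ?thesis using A_mono that by blast
  qed
  then show ?thesis by blast
qed

lemma Inter_A: "(\<Inter>z. A z) = (\<Inter>n::nat. A (- real n))"
proof -
  have "x \<in> A z" if "\<forall>n::nat. x \<in> A (- real n)" for x z
  proof -
    obtain n::nat where "- z \<le> real n" using real_arch_simple by blast
    then show ?thesis using A_mono[of "- real n" z] that by auto
  qed
  then show ?thesis by blast
qed

lemma Union_A_sets[measurable]: "(\<Union>z. A z) \<in> sets H"
  unfolding Union_A by measurable

lemma Inter_A_sets[measurable]: "(\<Inter>z. A z) \<in> sets H"
  unfolding Inter_A by measurable

lemma zz_meas[measurable]: "zz \<in> borel_measurable H"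
proof (rule borel_measurableI_less)
  fix y :: ereal
  have "{x \<in> space H. zz x < y} = (\<Union>r\<in>{r::real. r \<in> \<rat> \<and> ereal r < y}. A r)"
  proof (safe)
    fix x assume "x \<in> space H" "zz x < y"
    then obtain r where r: "r \<in> \<rat>" "zz x < ereal r" "ereal r < y"
    proof -
      obtain t where t: "zz x < t" "t < y" using \<open>zz x < y\<close> dense by blast
      then have "t \<noteq> \<infinity>" "t \<noteq> -\<infinity>" by auto
      then obtain t' where t': "t = ereal t'" by (cases t) auto
      obtain u where u: "zz x < u" "u < t" using t(1) dense by blast
      then have "u \<noteq> -\<infinity>" by auto
      show ?thesis
      proof (cases u)
        case (real u')
        have "u' < t'" using u t' real by auto
        then obtain r where "r \<in> \<rat>" "u' < r" "r < t'" using Rats_dense_in_real[of u' t'] by auto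
        then show ?thesis using that[of r] u t t' real
          by (meson ereal_less(2) less_ereal.simps(1) order.strict_trans)
      next
        case PInf then show ?thesis using u by auto
      next
        case MInf then show ?thesis using \<open>u \<noteq> -\<infinity>\<close> by auto
      qed
    qed
    then show "x \<in> (\<Union>r\<in>{r::real. r \<in> \<rat> \<and> ereal r < y}. A r)"
      using zz_less by blast
  next
    fix x r assume "r \<in> \<rat>" "ereal r < y" "x \<in> A r"
    then show "zz x < y" using zz_le[of x r] by auto
  qed auto
  moreover have "(\<Union>r\<in>{r::real. r \<in> \<rat> \<and> ereal r < y}. A r) \<in> sets H"
    by (intro sets.countable_UN'') (auto intro: countable_subset[OF _ countable_rat])
  ultimately show "{x \<in> space H. zz x < y} \<in> sets H" by simp
qed

lemma zz_level_sets[measurable]: "{x. zz x = c} \<in> sets H"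
  using measurable_sets[OF zz_meas, of "{c}"] by (simp add: vimage_def)

lemma abs_cont_step:
  assumes "e > 0"
  shows "\<exists>d>0. \<forall>a b. a \<le> b \<and> b - a < d \<longrightarrow> measure H (A b) - measure H (A a) < e"
proof -
  have ac: "abs_continuous_real (\<lambda>z. measure H (A z))"
    using scan unfolding scanning_family_def by auto
  from ac[unfolded abs_continuous_real_def, rule_format, OF assms] obtain d where d: "d > 0"
    and h: "\<forall>(n::nat) (a::nat \<Rightarrow> real) b.
        (\<forall>i<n. a i \<le> b i) \<and>
        (\<forall>i<n. \<forall>j<n. i \<noteq> j \<longrightarrow> b i \<le> a j \<or> b j \<le> a i) \<and>
        (\<Sum>i<n. b i - a i) < d
        \<longrightarrow> (\<Sum>i<n. \<bar>measure H (A (b i)) - measure H (A (a i))\<bar>) < e"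
    by (elim exE conjE) assumption
  show ?thesis
  proof (intro exI[of _ d] conjI allI impI d)
    fix a b :: real assume ab: "a \<le> b \<and> b - a < d"
    have "\<bar>measure H (A b) - measure H (A a)\<bar> < e"
      using h[rule_format, of 1 "\<lambda>_. a" "\<lambda>_. b"] ab by simp
    then show "measure H (A b) - measure H (A a) < e" by simp
  qed
qed

lemma level_null_real: "measure H {x. zz x = ereal c} = 0"
proof -
  have le: "measure H {x. zz x = ereal c} \<le> e" if "e > 0" for e
  proof -
    obtain d where d: "d > 0" "\<And>a b. a \<le> b \<and> b - a < d \<Longrightarrow> measure H (A b) - measure H (A a) < e"
      using abs_cont_step[OF \<open>e > 0\<close>] by blast
    have sub: "{x. zz x = ereal c} \<subseteq> A (c + d/3) - A (c - d/3)"
    proof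
      fix x assume "x \<in> {x. zz x = ereal c}"
      then have "zz x = ereal c" by simp
      moreover have "x \<in> A (c + d/3)" using zz_less[of x "c + d/3"] d(1) \<open>zz x = ereal c\<close> by auto
      moreover have "x \<notin> A (c - d/3)" using zz_le[of x "c - d/3"] d(1) \<open>zz x = ereal c\<close> by auto
      ultimately show "x \<in> A (c + d/3) - A (c - d/3)" by auto
    qed
    have "measure H {x. zz x = ereal c} \<le> measure H (A (c + d/3) - A (c - d/3))"
      by (rule P.finite_measure_mono[OF sub]) measurable
    also have "\<dots> = measure H (A (c + d/3)) - measure H (A (c - d/3))"
      by (rule P.finite_measure_Diff) (use A_mono[of "c - d/3" "c + d/3"] d(1) in auto)
    also have "\<dots> < e" using d by auto
    finally show ?thesis by simp
  qed
  have "measure H {x. zz x = ereal c} \<le> 0"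
  proof (rule field_le_epsilon)
    fix e :: real assume "0 < e" then show "measure H {x. zz x = ereal c} \<le> 0 + e"
      using le[OF \<open>0 < e\<close>] by simp
  qed
  then show ?thesis using measure_nonneg[of H "{x. zz x = ereal c}"] by linarith
qed

lemma level_null: "measure H {x. zz x = c} = 0"
proof (cases c)
  case (real r) then show ?thesis using level_null_real by simp
next
  case PInf
  have "{x. zz x = c} = space H - (\<Union>z. A z)" using zz_inf_iff PInf by auto
  also have "measure H \<dots> = 0"
    using P.prob_compl[OF Union_A_sets] scan unfolding scanning_family_def by simp
  finally show ?thesis .
next
  case MInf
  have "{x. zz x = c} = (\<Inter>z. A z)" using zz_minf_iff MInf by auto
  then show ?thesis using scan unfolding scanning_family_def by simp
qed

lemma AE_zz_ne: "AE x in H. zz x \<noteq> c"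
proof -
  have "emeasure H {x. zz x = c} = 0"
    by (metis P.emeasure_eq_measure ennreal_0 level_null)
  then have N: "{x. zz x = c} \<in> null_sets H"
    using zz_level_sets[of c] by (simp add: null_sets_def)
  show ?thesis by (rule AE_I'[OF N]) auto
qed

end



context kh begin

interpretation P: prob_space H by (rule H_prob)

lemma Aext_iff: "zz x \<noteq> c \<Longrightarrow> x \<in> Aext A c \<longleftrightarrow> zz x < c"
proof (cases c)
  case (real r)
  assume ne: "zz x \<noteq> c"
  show ?thesis using zz_less[of x r] zz_le[of x r] ne real by (auto simp: Aext_def)
next
  case PInf
  assume "zz x \<noteq> c"
  then show ?thesis using zz_inf_iff[of x] PInf by (auto simp: Aext_def)
next
  case MInf
  assume "zz x \<noteq> c"
  then show ?thesis using zz_minf_iff[of x] MInf by (auto simp: Aext_def)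
qed

lemma Aext_sets[measurable]: "Aext A c \<in> sets H"
  unfolding Aext_def by auto

lemma AE_Aext: "AE x in H. (x \<in> Aext A c \<longleftrightarrow> zz x < c)"
  using AE_zz_ne[of c] by eventually_elim (rule Aext_iff)

lemma AE_nAext: "AE x in H. (x \<notin> Aext A c \<longleftrightarrow> c < zz x)"
  using AE_zz_ne[of c] by eventually_elim (use Aext_iff not_less_iff_gr_or_eq in blast)

lemma mu_comp_meas[measurable]: "(\<lambda>x. mu x $ i) \<in> borel_measurable H"
  using mu_L2 unfolding L2_def by auto

lemma mu_meas[measurable]: "mu \<in> borel_measurable H"
  unfolding borel_measurable_euclidean_space[where f=mu]
  by (auto simp: Basis_vec_def inner_axis)

lemma vec_meas_iff: "(f::_ \<Rightarrow> real^'n) \<in> borel_measurable M \<longleftrightarrow> (\<forall>i. (\<lambda>x. f x $ i) \<in> borel_measurable M)"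
proof
  assume "f \<in> borel_measurable M" then show "\<forall>i. (\<lambda>x. f x $ i) \<in> borel_measurable M"
    by (auto intro: measurable_compose[OF _ borel_measurable_nth])
next
  assume "\<forall>i. (\<lambda>x. f x $ i) \<in> borel_measurable M"
  then show "f \<in> borel_measurable M"
    unfolding borel_measurable_euclidean_space[where f=f]
    by (auto simp: Basis_vec_def inner_axis)
qed

lemma L2_int_mult:
  assumes "L2 H f" "L2 H g"
  shows "integrable H (\<lambda>x. f x * g x)"
proof (rule Bochner_Integration.integrable_bound)
  show "integrable H (\<lambda>x. (f x)\<^sup>2 + (g x)\<^sup>2)"
    using assms unfolding L2_def by auto
  show "(\<lambda>x. f x * g x) \<in> borel_measurable H" using assms unfolding L2_def by auto
  show "AE x in H. norm (f x * g x) \<le> norm ((f x)\<^sup>2 + (g x)\<^sup>2)"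
  proof (rule AE_I2)
    fix x
    have "2 * \<bar>f x\<bar> * \<bar>g x\<bar> \<le> (f x)\<^sup>2 + (g x)\<^sup>2"
      using sum_squares_bound[of "\<bar>f x\<bar>" "\<bar>g x\<bar>"] by (simp add: power2_eq_square)
    moreover have "0 \<le> \<bar>f x\<bar> * \<bar>g x\<bar>" by simp
    moreover have "norm (f x * g x) = \<bar>f x\<bar> * \<bar>g x\<bar>" by (simp add: abs_mult)
    moreover have "norm ((f x)\<^sup>2 + (g x)\<^sup>2) = (f x)\<^sup>2 + (g x)\<^sup>2" by simp
    ultimately show "norm (f x * g x) \<le> norm ((f x)\<^sup>2 + (g x)\<^sup>2)"
      by linarith
  qed
qed

lemma L2_abs: "L2 H f \<Longrightarrow> L2 H (\<lambda>x. \<bar>f x\<bar>)"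
  unfolding L2_def by auto

lemma L2_add: "L2 H f \<Longrightarrow> L2 H g \<Longrightarrow> L2 H (\<lambda>x. f x + g x)"
proof -
  assume f: "L2 H f" and g: "L2 H g"
  have "integrable H (\<lambda>x. (f x)\<^sup>2 + (g x)\<^sup>2 + 2 * (f x * g x))"
    using f g L2_int_mult[OF f g] unfolding L2_def by auto
  then have "integrable H (\<lambda>x. (f x + g x)\<^sup>2)"
    by (simp add: power2_sum algebra_simps)
  then show ?thesis using f g unfolding L2_def by auto
qed

lemma L2_cmult: "L2 H f \<Longrightarrow> L2 H (\<lambda>x. c * f x)"
  unfolding L2_def by (auto simp: power_mult_distrib)

lemma L2_mu: "L2 H (\<lambda>x. mu x $ i)" using mu_L2 by auto

lemma L2_sum: "finite I \<Longrightarrow> (\<And>i. i \<in> I \<Longrightarrow> L2 H (f i)) \<Longrightarrow> L2 H (\<lambda>x. \<Sum>i\<in>I. f i x)"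
proof (induction I rule: finite_induct)
  case empty then show ?case by (simp add: L2_def)
next
  case (insert a I) then show ?case by (simp add: L2_add)
qed

lemma L2_inner_mu: "L2 H (\<lambda>x. v \<bullet> mu x)"
proof -
  have "L2 H (\<lambda>x. \<Sum>i\<in>UNIV. v $ i * mu x $ i)"
    by (intro L2_sum L2_cmult L2_mu) auto
  then show ?thesis by (simp add: inner_vec_def)
qed

lemma L2_norm_mu: "L2 H (\<lambda>x. norm (mu x))"
proof -
  have "integrable H (\<lambda>x. \<Sum>i\<in>UNIV. mu x $ i * mu x $ i)"
    using L2_int_mult[OF L2_mu L2_mu] by auto
  then have "integrable H (\<lambda>x. (norm (mu x))\<^sup>2)"
    by (simp add: power2_norm_eq_inner inner_vec_def)
  then show ?thesis unfolding L2_def by auto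
qed

definition Cset :: "(real^'p) set \<Rightarrow> real^'q^'q" where
  "Cset S = (\<chi> i j. \<integral>x. indicator S x * (mu x $ i * mu x $ j) \<partial>H)"

lemma int_ind_real: "S \<in> sets H \<Longrightarrow> integrable H f \<Longrightarrow> integrable H (\<lambda>x. indicator S x * (f x::real))"
  using integrable_mult_indicator[of S H f] by simp

lemma int_ind_mu: "S \<in> sets H \<Longrightarrow> integrable H (\<lambda>x. indicator S x * (mu x $ i * mu x $ j))"
  using L2_int_mult[OF L2_mu L2_mu] by (intro int_ind_real) auto

lemma Cset_sym: "Cset S $ i $ j = Cset S $ j $ i"
  unfolding Cset_def by (simp add: mult.commute)

lemma Cset_transpose: "transpose (Cset S) = Cset S"
  by (simp add: vec_eq_iff transpose_def Cset_sym)

lemma Cset_quad: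
  assumes S: "S \<in> sets H"
  shows "u \<bullet> (Cset S *v w) = (\<integral>x. indicator S x * ((u \<bullet> mu x) * (w \<bullet> mu x)) \<partial>H)"
proof -
  have "u \<bullet> (Cset S *v w) = (\<Sum>i\<in>UNIV. \<Sum>j\<in>UNIV. u $ i * w $ j * (\<integral>x. indicator S x * (mu x $ i * mu x $ j) \<partial>H))"
    by (simp add: inner_vec_def matrix_vector_mult_def Cset_def sum_distrib_left mult_ac)
  also have "\<dots> = (\<Sum>i\<in>UNIV. \<Sum>j\<in>UNIV. (\<integral>x. u $ i * w $ j * (indicator S x * (mu x $ i * mu x $ j)) \<partial>H))"
    by simp
  also have "\<dots> = (\<Sum>i\<in>UNIV. (\<integral>x. (\<Sum>j\<in>UNIV. u $ i * w $ j * (indicator S x * (mu x $ i * mu x $ j))) \<partial>H))"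
    by (subst Bochner_Integration.integral_sum) (auto intro!: int_ind_mu S)
  also have "\<dots> = (\<integral>x. (\<Sum>i\<in>UNIV. \<Sum>j\<in>UNIV. u $ i * w $ j * (indicator S x * (mu x $ i * mu x $ j))) \<partial>H)"
    by (subst Bochner_Integration.integral_sum) (auto intro!: int_ind_mu S)
  also have "\<dots> = (\<integral>x. indicator S x * ((u \<bullet> mu x) * (w \<bullet> mu x)) \<partial>H)"
    apply (rule Bochner_Integration.integral_cong)
     apply (auto simp: inner_vec_def sum_distrib_left sum_distrib_right mult_ac)
    apply (subst sum.swap)
    apply (simp add: mult_ac)
    done
  finally show ?thesis .
qed

lemma Cset_psd: "S \<in> sets H \<Longrightarrow> 0 \<le> v \<bullet> (Cset S *v v)"
  by (simp add: Cset_quad)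

lemma Cset_mono:
  assumes "S \<in> sets H" "T \<in> sets H" "S \<subseteq> T"
  shows "v \<bullet> (Cset S *v v) \<le> v \<bullet> (Cset T *v v)"
proof -
  have "(\<integral>x. indicator S x * ((v \<bullet> mu x) * (v \<bullet> mu x)) \<partial>H) \<le> (\<integral>x. indicator T x * ((v \<bullet> mu x) * (v \<bullet> mu x)) \<partial>H)"
  proof (rule integral_mono)
    have "integrable H (\<lambda>x. (v \<bullet> mu x) * (v \<bullet> mu x))" by (rule L2_int_mult[OF L2_inner_mu L2_inner_mu])
    then show "integrable H (\<lambda>x. indicator S x * ((v \<bullet> mu x) * (v \<bullet> mu x)))"
      "integrable H (\<lambda>x. indicator T x * ((v \<bullet> mu x) * (v \<bullet> mu x)))"
      using assms by (auto intro: int_ind_real)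
    show "indicator S x * ((v \<bullet> mu x) * (v \<bullet> mu x)) \<le> indicator T x * ((v \<bullet> mu x) * (v \<bullet> mu x))" for x
      using assms(3) by (auto simp: indicator_def)
  qed
  then show ?thesis using assms by (simp add: Cset_quad)
qed

lemma Cset_cong_AE:
  assumes "S \<in> sets H" "T \<in> sets H" "AE x in H. (x \<in> S \<longleftrightarrow> x \<in> T)"
  shows "Cset S = Cset T"
  unfolding Cset_def vec_eq_iff
proof (intro allI)
  fix i j
  have "(\<integral>x. indicator S x * (mu x $ i * mu x $ j) \<partial>H) = (\<integral>x. indicator T x * (mu x $ i * mu x $ j) \<partial>H)"
    by (rule integral_cong_AE) (use assms in \<open>auto simp: indicator_def\<close>)
  then show "(\<chi> i j. \<integral>x. indicator S x * (mu x $ i * mu x $ j) \<partial>H) $ i $ j =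
     (\<chi> i j. \<integral>x. indicator T x * (mu x $ i * mu x $ j) \<partial>H) $ i $ j" by simp
qed

lemma zz_less_sets[measurable]: "{x. c < zz x} \<in> sets H"
  using measurable_sets[OF zz_meas, of "{c<..}"] by (simp add: vimage_def)

lemma compl_sets_H: "S \<in> sets H \<Longrightarrow> -S \<in> sets H"
  using sets.compl_sets[of S H] by (simp add: Compl_eq_Diff_UNIV)

abbreviation C where "C c \<equiv> Cz H mu A c"

lemma C_eq: "C c = Cset {x. c < zz x}"
proof -
  have "C c = Cset (- Aext A c)"
    unfolding Cz_def Cset_def set_lebesgue_integral_def by simp
  also have "\<dots> = Cset {x. c < zz x}"
    by (rule Cset_cong_AE) (use AE_nAext[of c] in \<open>auto intro: compl_sets_H\<close>)
  finally show ?thesis .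
qed


lemma C_sym: "transpose (C c) = C c"
  by (simp add: C_eq Cset_transpose)

lemma C_mono: "c \<le> c' \<Longrightarrow> v \<bullet> (C c' *v v) \<le> v \<bullet> (C c *v v)"
  unfolding C_eq by (rule Cset_mono) auto

lemma C_psd: "0 \<le> v \<bullet> (C c *v v)"
  unfolding C_eq by (rule Cset_psd) auto

lemma Ctheta_eq: "Ctheta H mu = Cset UNIV"
  unfolding Ctheta_def Cset_def by simp

lemma C_minf: "C (-\<infinity>) = Ctheta H mu"
  unfolding C_eq Ctheta_eq
  by (rule Cset_cong_AE) (use AE_zz_ne[of "-\<infinity>"] zz_less_sets[of "-\<infinity>"] sets.top[of H] in auto)

lemma sym_swap:
  fixes M :: "real^'n^'n"
  assumes "transpose M = M"
  shows "u \<bullet> (M *v v) = v \<bullet> (M *v u)"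
proof -
  have "u \<bullet> (M *v v) = (u v* M) \<bullet> v" by (simp add: dot_lmul_matrix)
  also have "\<dots> = (transpose M *v u) \<bullet> v" by simp
  also have "\<dots> = v \<bullet> (M *v u)" using assms by (simp add: inner_commute)
  finally show ?thesis .
qed

lemma mv_scale: "(M::real^'n^'m) *v (c *\<^sub>R v) = c *\<^sub>R (M *v v)"
  using linear_scale[OF bounded_linear.linear[OF matrix_vector_mul_bounded_linear]] by blast

lemma mv_add: "(M::real^'n^'m) *v (u + v) = M *v u + M *v v"
  by (simp add: matrix_vector_right_distrib)

lemma quad_expand:
  fixes M :: "real^'n^'n"
  assumes "transpose M = M"
  shows "(u + t *\<^sub>R v) \<bullet> (M *v (u + t *\<^sub>R v)) =
     u \<bullet> (M *v u) + 2 * t * (u \<bullet> (M *v v)) + t\<^sup>2 * (v \<bullet> (M *v v))"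
  using sym_swap[OF assms, of v u]
  by (simp add: mv_add mv_scale inner_add_left inner_add_right power2_eq_square algebra_simps)

lemma psd_CS:
  fixes M :: "real^'n^'n"
  assumes sym: "transpose M = M" and psd: "\<And>x. 0 \<le> x \<bullet> (M *v x)"
  shows "(u \<bullet> (M *v v))\<^sup>2 \<le> (u \<bullet> (M *v u)) * (v \<bullet> (M *v v))"
proof -
  define a where "a = u \<bullet> (M *v u)"
  define b where "b = u \<bullet> (M *v v)"
  define c where "c = v \<bullet> (M *v v)"
  have q: "0 \<le> a + 2 * t * b + t\<^sup>2 * c" for t
    using psd[of "u + t *\<^sub>R v"] quad_expand[OF sym, of u t v] by (simp add: a_def b_def c_def)
  have c0: "0 \<le> c" using psd by (simp add: c_def)
  show ?thesis
  proof (cases "c = 0")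
    case True
    have "b = 0"
    proof (rule ccontr)
      assume "b \<noteq> 0"
      have "0 \<le> a + 2 * (- (a + 1) / (2 * b)) * b" using q[of "- (a + 1) / (2 * b)"] True by simp
      also have "\<dots> = -1" using \<open>b \<noteq> 0\<close> by (simp add: field_simps)
      finally show False by simp
    qed
    then show ?thesis using True by (simp add: b_def c_def)
  next
    case False
    then have cpos: "c > 0" using c0 by simp
    have "0 \<le> a + 2 * (- b / c) * b + (- b / c)\<^sup>2 * c" using q[of "- b / c"] .
    also have "\<dots> = a - b\<^sup>2 / c" using cpos by (simp add: field_simps power2_eq_square)
    finally have "b\<^sup>2 / c \<le> a" by simp
    then have "b\<^sup>2 \<le> a * c" using cpos by (simp add: field_simps)
    then show ?thesis by (simp add: a_def b_def c_def)
  qed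
qed

lemma psd_zero:
  fixes M :: "real^'n^'n"
  assumes sym: "transpose M = M" and psd: "\<And>x. 0 \<le> x \<bullet> (M *v x)"
    and z: "v \<bullet> (M *v v) = 0"
  shows "M *v v = 0"
proof -
  have "((M *v v) \<bullet> (M *v v))\<^sup>2 \<le> ((M *v v) \<bullet> (M *v (M *v v))) * (v \<bullet> (M *v v))"
    by (rule psd_CS[OF sym psd])
  then have "((M *v v) \<bullet> (M *v v))\<^sup>2 \<le> 0" using z by simp
  then show ?thesis by simp
qed

lemma invertible_inv:
  assumes "invertible M"
  shows "M ** matrix_inv M = mat 1" "matrix_inv M ** M = mat 1"
proof -
  have "\<exists>A'. M ** A' = mat 1 \<and> A' ** M = mat 1" using assms unfolding invertible_def .
  then have "M ** matrix_inv M = mat 1 \<and> matrix_inv M ** M = mat 1"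
    unfolding matrix_inv_def by (rule someI_ex)
  then show "M ** matrix_inv M = mat 1" "matrix_inv M ** M = mat 1" by auto
qed

lemma pd_invertible:
  fixes M :: "real^'n^'n"
  assumes "\<And>v. v \<noteq> 0 \<Longrightarrow> 0 < v \<bullet> (M *v v)"
  shows "invertible M"
proof -
  have "\<forall>x. M *v x = 0 \<longrightarrow> x = 0"
  proof (intro allI impI)
    fix x assume "M *v x = 0"
    then have "x \<bullet> (M *v x) = 0" by simp
    then show "x = 0" using assms[of x] by (cases "x = 0") auto
  qed
  then show ?thesis unfolding invertible_left_inverse matrix_left_invertible_ker .
qed

lemma C_inv: "c \<noteq> \<infinity> \<Longrightarrow> invertible (C c)"
proof (cases c)
  case (real r) then show ?thesis using Cz_nonsing by auto
next
  case MInf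
  then show ?thesis using Ctheta_pd C_minf unfolding pos_def_matrix_def
    by (intro pd_invertible) auto
qed auto

lemma C_lower:
  "\<exists>l>0. \<forall>v. l * (norm v)\<^sup>2 \<le> v \<bullet> (C (ereal s) *v v)"
proof -
  let ?Q = "\<lambda>v. v \<bullet> (C (ereal s) *v v)"
  have cont: "continuous_on (sphere 0 1) ?Q"
    by (intro continuous_intros linear_continuous_on matrix_vector_mul_bounded_linear)
  obtain i :: 'q where True by simp
  have ne: "sphere (0::real^'q) 1 \<noteq> {}"
    using norm_axis_1[of i] by (auto simp: sphere_def intro!: exI[of _ "axis i 1"])
  obtain v0 where v0: "v0 \<in> sphere 0 1" "\<And>v. v \<in> sphere 0 1 \<Longrightarrow> ?Q v0 \<le> ?Q v"
    using continuous_attains_inf[OF compact_sphere ne cont] by blast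
  have pos: "0 < ?Q v0"
  proof -
    have "0 \<le> ?Q v0" by (rule C_psd)
    moreover have "?Q v0 \<noteq> 0"
    proof
      assume "?Q v0 = 0"
      then have "C (ereal s) *v v0 = 0" by (intro psd_zero[OF C_sym C_psd])
      then have "v0 = 0" using C_inv[of "ereal s"]
        unfolding invertible_left_inverse matrix_left_invertible_ker by auto
      then show False using v0(1) by simp
    qed
    ultimately show ?thesis by simp
  qed
  have "?Q v0 * (norm v)\<^sup>2 \<le> ?Q v" for v
  proof (cases "v = 0")
    case True then show ?thesis by simp
  next
    case False
    let ?u = "(1 / norm v) *\<^sub>R v"
    have "?u \<in> sphere 0 1" using False by simp
    then have "?Q v0 \<le> ?Q ?u" by (rule v0(2))
    also have "?Q ?u = ?Q v / (norm v)\<^sup>2" by (simp add: mv_scale power2_eq_square)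
    finally show ?thesis using False by (simp add: field_simps)
  qed
  then show ?thesis using pos by (intro exI[of _ "?Q v0"]) auto
qed

definition V :: "real^'p \<Rightarrow> real^'q" where
  "V y = mu y v* matrix_inv (C (zz y))"

lemma V_solve:
  assumes "zz y \<noteq> \<infinity>"
  shows "C (zz y) *v V y = mu y"
proof -
  have inv: "matrix_inv (C (zz y)) ** C (zz y) = mat 1"
    using invertible_inv(2)[OF C_inv[OF assms]] .
  have "C (zz y) *v V y = transpose (C (zz y)) *v V y" by (simp add: C_sym)
  also have "\<dots> = V y v* C (zz y)" by simp
  also have "\<dots> = mu y v* (matrix_inv (C (zz y)) ** C (zz y))"
    unfolding V_def by (simp add: vector_matrix_mul_assoc)
  also have "\<dots> = mu y" using inv by simp
  finally show ?thesis .
qed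

lemma C_solve_quad:
  assumes "zz y \<noteq> \<infinity>"
  shows "w \<bullet> (C (zz y) *v V y) = w \<bullet> mu y"
  using V_solve[OF assms] by simp

lemma V_bound: "\<exists>K>0. \<forall>y. zz y \<le> ereal s \<longrightarrow> norm (V y) \<le> K * norm (mu y)"
proof -
  obtain l where l: "l > 0" "\<And>v. l * (norm v)\<^sup>2 \<le> v \<bullet> (C (ereal s) *v v)"
    using C_lower[of s] by blast
  have "norm (V y) \<le> (1 / l) * norm (mu y)" if y: "zz y \<le> ereal s" for y
  proof -
    have ne: "zz y \<noteq> \<infinity>" using y by auto
    let ?w = "V y"
    have "l * (norm ?w)\<^sup>2 \<le> ?w \<bullet> (C (ereal s) *v ?w)" by (rule l(2))
    also have "\<dots> \<le> ?w \<bullet> (C (zz y) *v ?w)" by (rule C_mono[OF y])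
    also have "\<dots> = ?w \<bullet> mu y" by (rule C_solve_quad[OF ne])
    also have "\<dots> \<le> norm ?w * norm (mu y)" by (rule norm_cauchy_schwarz)
    finally have *: "l * (norm ?w)\<^sup>2 \<le> norm ?w * norm (mu y)" .
    show ?thesis
    proof (cases "norm ?w = 0")
      case True then show ?thesis using l by simp
    next
      case False
      then have "l * norm ?w \<le> norm (mu y)" using * by (simp add: power2_eq_square)
      then show ?thesis using l by (simp add: field_simps)
    qed
  qed
  then show ?thesis using l by (intro exI[of _ "1/l"]) auto
qed

lemma C_entry_meas[measurable]: "(\<lambda>y. C (zz y) $ i $ j) \<in> borel_measurable H"
proof -
  interpret PP: pair_sigma_finite H H ..
  have eq: "C (zz y) $ i $ j = (\<integral>x. indicator {x. zz y < zz x} x * (mu x $ i * mu x $ j) \<partial>H)" for y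
    by (simp add: C_eq Cset_def)
  have "(\<lambda>(y, x). indicator {x. zz y < zz x} x * (mu x $ i * mu x $ j)) \<in> borel_measurable (H \<Otimes>\<^sub>M H)"
    unfolding indicator_def by measurable
  then have "(\<lambda>y. \<integral>x. indicator {x. zz y < zz x} x * (mu x $ i * mu x $ j) \<partial>H) \<in> borel_measurable H"
    by (rule P.borel_measurable_lebesgue_integral[of "\<lambda>y x. indicator {x. zz y < zz x} x * (mu x $ i * mu x $ j)", simplified])
  then show ?thesis by (simp add: eq)
qed

lemma det_meas:
  fixes M :: "'a \<Rightarrow> real^'n^'n"
  assumes "\<And>i j. (\<lambda>y. M y $ i $ j) \<in> borel_measurable N"
  shows "(\<lambda>y. det (M y)) \<in> borel_measurable N"
  unfolding det_def using assms by measurable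

lemma V_meas[measurable]: "V \<in> borel_measurable H"
proof -
  define W where "W y = (\<chi> k. det (\<chi> i j. if j = k then mu y $ i else C (zz y) $ i $ j) / det (C (zz y)))" for y
  have eq: "V y = (if zz y = \<infinity> then mu y v* matrix_inv (C \<infinity>) else W y)" for y
  proof (cases "zz y = \<infinity>")
    case True then show ?thesis by (simp add: V_def)
  next
    case False
    have "det (C (zz y)) \<noteq> 0" using C_inv[OF False] by (simp add: invertible_det_nz)
    then have "C (zz y) *v V y = mu y \<longleftrightarrow> V y = W y" unfolding W_def by (rule cramer)
    then show ?thesis using V_solve[OF False] False by simp
  qed
  have Wm: "W \<in> borel_measurable H"
    unfolding vec_meas_iff W_def
  proof
    fix k
    have "(\<lambda>y. det (\<chi> i j. if j = k then mu y $ i else C (zz y) $ i $ j)) \<in> borel_measurable H"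
      by (rule det_meas) simp
    moreover have "(\<lambda>y. det (C (zz y))) \<in> borel_measurable H"
      by (rule det_meas) simp
    ultimately show "(\<lambda>x. (\<chi> k. det (\<chi> i j. if j = k then mu x $ i else C (zz x) $ i $ j) / det (C (zz x))) $ k) \<in> borel_measurable H"
      by simp
  qed
  have "(\<lambda>y. mu y v* matrix_inv (C \<infinity>)) \<in> borel_measurable H"
    unfolding vec_meas_iff by (simp add: vector_matrix_mult_def)
  then have "(\<lambda>y. if zz y = \<infinity> then mu y v* matrix_inv (C \<infinity>) else W y) \<in> borel_measurable H"
    using Wm by measurable
  then show ?thesis by (simp add: eq[abs_def])
qed

definition rr :: "(real^'p \<Rightarrow> real) \<Rightarrow> real^'p \<Rightarrow> real^'q" where
  "rr g y = g y *\<^sub>R V y"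

definition aa :: "(real^'p \<Rightarrow> real) \<Rightarrow> ereal \<Rightarrow> real^'q" where
  "aa g c = (\<integral>y. indicator {y. zz y < c} y *\<^sub>R rr g y \<partial>H)"

lemma L2_meas: "L2 H g \<Longrightarrow> g \<in> borel_measurable H"
  unfolding L2_def by auto

lemma rr_meas[measurable]: "L2 H g \<Longrightarrow> rr g \<in> borel_measurable H"
  unfolding rr_def[abs_def] using L2_meas by measurable

lemma Top_eq:
  assumes g: "L2 H g"
  shows "Top H mu A g x = aa g (zz x) \<bullet> mu x"
proof -
  have gm[measurable]: "g \<in> borel_measurable H" using L2_meas[OF g] .
  have "(LINT y:Aext A (zz x)|H. g y *\<^sub>R (mu y v* matrix_inv (C (zz y))))
      = (\<integral>y. indicator (Aext A (zz x)) y *\<^sub>R rr g y \<partial>H)"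
    unfolding set_lebesgue_integral_def rr_def V_def ..
  also have "\<dots> = aa g (zz x)"
    unfolding aa_def
  proof (rule integral_cong_AE)
    show "(\<lambda>y. indicator (Aext A (zz x)) y *\<^sub>R rr g y) \<in> borel_measurable H"
      using g by measurable
    have [measurable]: "{y. zz y < zz x} \<in> sets H"
      using measurable_sets[OF zz_meas, of "{..<zz x}"] by (simp add: vimage_def)
    show "(\<lambda>y. indicator {y. zz y < zz x} y *\<^sub>R rr g y) \<in> borel_measurable H"
      using g by measurable
    show "AE y in H. indicator (Aext A (zz x)) y *\<^sub>R rr g y = indicator {y. zz y < zz x} y *\<^sub>R rr g y"
      using AE_Aext[of "zz x"] by eventually_elim (auto simp: indicator_def)
  qed
  finally show ?thesis unfolding Top_def by simp
qed

lemma zz_lt_sets[measurable]: "{y. zz y < c} \<in> sets H"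
  using measurable_sets[OF zz_meas, of "{..<c}"] by (simp add: vimage_def)

lemma zz_le_sets[measurable]: "{y. zz y \<le> c} \<in> sets H"
  using measurable_sets[OF zz_meas, of "{..c}"] by (simp add: vimage_def)

lemma aa_comp_meas[measurable]:
  assumes g: "L2 H g"
  shows "(\<lambda>x. aa g (zz x)) \<in> borel_measurable H"
proof -
  have [measurable]: "g \<in> borel_measurable H" using L2_meas[OF g] .
  have "(\<lambda>(x, y). indicator {y. zz y < zz x} y *\<^sub>R rr g y) \<in> borel_measurable (H \<Otimes>\<^sub>M H)"
    unfolding indicator_def using g by measurable
  then show ?thesis
    unfolding aa_def by (rule P.borel_measurable_lebesgue_integral[of "\<lambda>x y. indicator {y. zz y < zz x} y *\<^sub>R rr g y", simplified])
qed

lemma Top_meas[measurable]: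
  assumes g: "L2 H g"
  shows "Top H mu A g \<in> borel_measurable H"
proof -
  have [measurable]: "(\<lambda>x. aa g (zz x)) \<in> borel_measurable H" using aa_comp_meas[OF g] .
  have "(\<lambda>x. aa g (zz x) \<bullet> mu x) \<in> borel_measurable H" by measurable
  moreover have "Top H mu A g = (\<lambda>x. aa g (zz x) \<bullet> mu x)" using Top_eq[OF g] by auto
  ultimately show ?thesis by simp
qed

lemma Kop_meas[measurable]:
  assumes g: "L2 H g"
  shows "Kop H mu A g \<in> borel_measurable H"
  unfolding Kop_def[abs_def] using Top_meas[OF g] L2_meas[OF g] by measurable

definition KV where "KV s K \<longleftrightarrow> K > 0 \<and> (\<forall>y. zz y \<le> ereal s \<longrightarrow> norm (V y) \<le> K * norm (mu y))"

lemma KV_ex: "\<exists>K. KV s K"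
  using V_bound[of s] unfolding KV_def by blast

lemma Gm_int: "L2 H g \<Longrightarrow> integrable H (\<lambda>y. \<bar>g y\<bar> * norm (mu y))"
  using L2_int_mult[OF L2_abs L2_norm_mu] by blast

lemma int_bound:
  fixes f :: "real^'p \<Rightarrow> 'b::{banach,second_countable_topology}" and u :: "real^'p \<Rightarrow> real"
  assumes "integrable H u" "f \<in> borel_measurable H" "\<And>x. norm (f x) \<le> u x"
  shows "integrable H f"
  using assms by (intro Bochner_Integration.integrable_bound[of H u f]) (auto intro!: AE_I2 order_trans[OF _ abs_ge_self])

lemma rr_bound:
  assumes "KV s K" "zz y \<le> ereal s"
  shows "norm (rr g y) \<le> K * (\<bar>g y\<bar> * norm (mu y))"
proof -
  have "norm (rr g y) = \<bar>g y\<bar> * norm (V y)" by (simp add: rr_def)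
  also have "\<dots> \<le> \<bar>g y\<bar> * (K * norm (mu y))"
    using assms unfolding KV_def by (intro mult_left_mono) auto
  finally show ?thesis by (simp add: mult_ac)
qed

lemma aa_int:
  assumes g: "L2 H g" and K: "KV s K" and c: "c \<le> ereal s"
  shows "integrable H (\<lambda>y. indicator {y. zz y < c} y *\<^sub>R rr g y)"
proof (rule int_bound)
  show "integrable H (\<lambda>y. K * (\<bar>g y\<bar> * norm (mu y)))" using Gm_int[OF g] by simp
  show "(\<lambda>y. indicator {y. zz y < c} y *\<^sub>R rr g y) \<in> borel_measurable H" using g by measurable
  fix y
  show "norm (indicator {y. zz y < c} y *\<^sub>R rr g y) \<le> K * (\<bar>g y\<bar> * norm (mu y))"
  proof (cases "zz y < c")
    case True
    then have "zz y \<le> ereal s" using c by auto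
    then show ?thesis using rr_bound[OF K] True by simp
  next
    case False then show ?thesis using K by (simp add: KV_def)
  qed
qed

lemma aa_bound:
  assumes g: "L2 H g" and K: "KV s K" and c: "c \<le> ereal s"
  shows "norm (aa g c) \<le> K * (\<integral>y. \<bar>g y\<bar> * norm (mu y) \<partial>H)"
proof -
  have "norm (aa g c) \<le> (\<integral>y. norm (indicator {y. zz y < c} y *\<^sub>R rr g y) \<partial>H)"
    unfolding aa_def by (rule integral_norm_bound)
  also have "\<dots> \<le> (\<integral>y. K * (\<bar>g y\<bar> * norm (mu y)) \<partial>H)"
  proof (rule integral_mono)
    show "integrable H (\<lambda>y. norm (indicator {y. zz y < c} y *\<^sub>R rr g y))"
      using integrable_norm[OF aa_int[OF g K c]] .
    show "integrable H (\<lambda>y. K * (\<bar>g y\<bar> * norm (mu y)))" using Gm_int[OF g] by simp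
    fix y
    show "norm (indicator {y. zz y < c} y *\<^sub>R rr g y) \<le> K * (\<bar>g y\<bar> * norm (mu y))"
    proof (cases "zz y < c")
      case True
      then have "zz y \<le> ereal s" using c by auto
      then show ?thesis using rr_bound[OF K] True by simp
    next
      case False then show ?thesis using K by (simp add: KV_def)
    qed
  qed
  finally show ?thesis by simp
qed

lemma fub:
  fixes F :: "real^'p \<Rightarrow> real^'p \<Rightarrow> real"
  assumes Fm: "(\<lambda>(x,y). F x y) \<in> borel_measurable (H \<Otimes>\<^sub>M H)"
    and u: "integrable H u" and v: "integrable H v"
    and bd: "\<And>x y. \<bar>F x y\<bar> \<le> u x * v y"
  shows "(\<integral>x. \<integral>y. F x y \<partial>H \<partial>H) = (\<integral>y. \<integral>x. F x y \<partial>H \<partial>H)"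
proof -
  interpret PP: pair_sigma_finite H H ..
  have um[measurable]: "u \<in> borel_measurable H" and vm[measurable]: "v \<in> borel_measurable H"
    using u v by auto
  have G: "integrable (H \<Otimes>\<^sub>M H) (\<lambda>(x,y). u x * v y)"
  proof (rule PP.Fubini_integrable)
    show "(\<lambda>(x, y). u x * v y) \<in> borel_measurable (H \<Otimes>\<^sub>M H)" by measurable
    have "integrable H (\<lambda>x. \<bar>u x\<bar> * (\<integral>y. \<bar>v y\<bar> \<partial>H))" using u by auto
    then show "integrable H (\<lambda>x. \<integral>y. norm (case (x, y) of (x, y) \<Rightarrow> u x * v y) \<partial>H)"
      by (simp add: abs_mult)
    show "AE x in H. integrable H (\<lambda>y. case (x, y) of (x, y) \<Rightarrow> u x * v y)"
      using v by auto
  qed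
  have "integrable (H \<Otimes>\<^sub>M H) (\<lambda>(x,y). F x y)"
  proof (rule Bochner_Integration.integrable_bound[OF G Fm])
    show "AE p in H \<Otimes>\<^sub>M H. norm (case p of (x, y) \<Rightarrow> F x y) \<le> norm (case p of (x, y) \<Rightarrow> u x * v y)"
      by (intro AE_I2) (auto intro: order_trans[OF bd abs_ge_self])
  qed
  then show ?thesis using PP.Fubini_integral[of F] by simp
qed

lemma aa_int_le:
  assumes g: "L2 H g" and K: "KV s K" and c: "c \<le> ereal s"
  shows "integrable H (\<lambda>y. indicator {y. zz y \<le> c} y *\<^sub>R rr g y)"
proof (rule int_bound)
  show "integrable H (\<lambda>y. K * (\<bar>g y\<bar> * norm (mu y)))" using Gm_int[OF g] by simp
  show "(\<lambda>y. indicator {y. zz y \<le> c} y *\<^sub>R rr g y) \<in> borel_measurable H" using g by measurable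
  fix y
  show "norm (indicator {y. zz y \<le> c} y *\<^sub>R rr g y) \<le> K * (\<bar>g y\<bar> * norm (mu y))"
  proof (cases "zz y \<le> c")
    case True
    then have "zz y \<le> ereal s" using c by auto
    then show ?thesis using rr_bound[OF K] True by simp
  next
    case False then show ?thesis using K by (simp add: KV_def)
  qed
qed

lemma T_bound:
  assumes g: "L2 H g" and K: "KV s K" and x: "zz x \<le> ereal s"
  shows "\<bar>aa g (zz x) \<bullet> mu x\<bar> \<le> (K * (\<integral>y. \<bar>g y\<bar> * norm (mu y) \<partial>H)) * norm (mu x)"
proof -
  have "\<bar>aa g (zz x) \<bullet> mu x\<bar> \<le> norm (aa g (zz x)) * norm (mu x)" by (rule Cauchy_Schwarz_ineq2)
  also have "\<dots> \<le> (K * (\<integral>y. \<bar>g y\<bar> * norm (mu y) \<partial>H)) * norm (mu x)"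
    by (intro mult_right_mono aa_bound[OF g K x]) auto
  finally show ?thesis .
qed

lemma T_int_repr:
  assumes g: "L2 H g" and K: "KV s K" and x: "c \<le> ereal s"
  shows "aa g c \<bullet> v = (\<integral>y. indicator {y. zz y < c} y * (rr g y \<bullet> v) \<partial>H)"
proof -
  have "(\<integral>y. (indicator {y. zz y < c} y *\<^sub>R rr g y) \<bullet> v \<partial>H) = aa g c \<bullet> v"
    unfolding aa_def by (rule integral_inner_left) (rule aa_int[OF g K x])
  then show ?thesis by (simp add: inner_scaleR_left)
qed

lemma Cset_diff:
  assumes "S \<in> sets H" "S' \<in> sets H" "S' \<subseteq> S"
  shows "Cset (S - S') = Cset S - Cset S'"
  unfolding vec_eq_iff
proof (intro allI)
  fix i j
  have "(\<integral>x. indicator (S - S') x * (mu x $ i * mu x $ j) \<partial>H)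
      = (\<integral>x. indicator S x * (mu x $ i * mu x $ j) - indicator S' x * (mu x $ i * mu x $ j) \<partial>H)"
    by (rule Bochner_Integration.integral_cong) (use assms in \<open>auto simp: indicator_def\<close>)
  also have "\<dots> = (\<integral>x. indicator S x * (mu x $ i * mu x $ j) \<partial>H) - (\<integral>x. indicator S' x * (mu x $ i * mu x $ j) \<partial>H)"
    by (rule Bochner_Integration.integral_diff) (auto intro!: int_ind_mu assms)
  finally show "Cset (S - S') $ i $ j = (Cset S - Cset S') $ i $ j"
    by (simp add: Cset_def)
qed

lemma Cset_empty: "Cset {} = 0"
  unfolding Cset_def by (simp add: vec_eq_iff)

lemma Cset_interval:
  "Cset {x. c < zz x \<and> zz x \<le> ereal s} = (if c \<le> ereal s then C c - C (ereal s) else 0)"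
proof (cases "c \<le> ereal s")
  case True
  have "{x. c < zz x \<and> zz x \<le> ereal s} = {x. c < zz x} - {x. ereal s < zz x}" by auto
  moreover have "{x. ereal s < zz x} \<subseteq> {x. c < zz x}" using True by auto
  ultimately show ?thesis using True by (simp add: Cset_diff C_eq)
next
  case False
  then have "{x. c < zz x \<and> zz x \<le> ereal s} = {}" by auto
  then show ?thesis using False by (metis Cset_empty)
qed

lemma rr_C:
  assumes "zz y \<noteq> \<infinity>"
  shows "rr g y \<bullet> (C (zz y) *v w) = g y * (w \<bullet> mu y)"
proof -
  have "rr g y \<bullet> (C (zz y) *v w) = w \<bullet> (C (zz y) *v rr g y)" by (rule sym_swap[OF C_sym])
  also have "\<dots> = g y * (w \<bullet> mu y)" unfolding rr_def mv_scale using V_solve[OF assms] by simp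
  finally show ?thesis .
qed

definition PP :: "(real^'p \<Rightarrow> real) \<Rightarrow> real^'p \<Rightarrow> real^'p \<Rightarrow> real" where
  "PP g y y' = (if zz y' \<le> zz y then g y * (rr g y' \<bullet> mu y) else g y' * (rr g y \<bullet> mu y'))"

lemma key_pair:
  "rr g y \<bullet> (Cset {x. zz y < zz x \<and> zz y' < zz x \<and> zz x \<le> ereal s} *v rr g y') =
   indicator {y. zz y \<le> ereal s} y * indicator {y. zz y \<le> ereal s} y' *
     (PP g y y' - rr g y \<bullet> (C (ereal s) *v rr g y'))"
proof -
  have eqS: "{x. zz y < zz x \<and> zz y' < zz x \<and> zz x \<le> ereal s} = {x. max (zz y) (zz y') < zz x \<and> zz x \<le> ereal s}"
    by auto
  show ?thesis
  proof (cases "zz y \<le> ereal s \<and> zz y' \<le> ereal s")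
    case False
    then have "\<not> max (zz y) (zz y') \<le> ereal s" by auto
    then show ?thesis using False unfolding eqS Cset_interval by (auto simp: indicator_def)
  next
    case True
    then have m: "max (zz y) (zz y') \<le> ereal s" by auto
    have ne: "zz y \<noteq> \<infinity>" "zz y' \<noteq> \<infinity>" using True by auto
    have "rr g y \<bullet> (C (max (zz y) (zz y')) *v rr g y') = PP g y y'"
    proof (cases "zz y' \<le> zz y")
      case True
      then have "max (zz y) (zz y') = zz y" by (simp add: max_def)
      then have "rr g y \<bullet> (C (max (zz y) (zz y')) *v rr g y') = rr g y' \<bullet> (C (zz y) *v rr g y)"
        using sym_swap[OF C_sym] by simp
      also have "\<dots> = g y * (rr g y' \<bullet> mu y)"
        using sym_swap[OF C_sym, of "rr g y'" "zz y" "rr g y"] rr_C[OF ne(1), of g "rr g y'"] by simp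
      finally show ?thesis using True by (simp add: PP_def)
    next
      case False
      then have "max (zz y) (zz y') = zz y'" by (auto simp: max_def)
      then have "rr g y \<bullet> (C (max (zz y) (zz y')) *v rr g y') = rr g y \<bullet> (C (zz y') *v rr g y')" by simp
      also have "\<dots> = rr g y \<bullet> (g y' *\<^sub>R mu y')"
        unfolding rr_def[of g y'] mv_scale using V_solve[OF ne(2)] by simp
      finally show ?thesis using False by (simp add: PP_def)
    qed
    then show ?thesis unfolding eqS Cset_interval using m True
      by (simp add: matrix_vector_mult_diff_rdistrib inner_diff_right indicator_def)
  qed
qed

end


context kh begin
interpretation P: prob_space H by (rule H_prob)

definition Rs :: "real \<Rightarrow> (real^'p) set" where "Rs s = {y. zz y \<le> ereal s}"
definition TT :: "(real^'p \<Rightarrow> real) \<Rightarrow> real^'p \<Rightarrow> real" where "TT g x = aa g (zz x) \<bullet> mu x"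
definition ap :: "(real^'p \<Rightarrow> real) \<Rightarrow> real \<Rightarrow> real^'q" where
  "ap g s = (\<integral>y. indicator (Rs s) y *\<^sub>R rr g y \<partial>H)"

lemma Rs_sets[measurable]: "Rs s \<in> sets H"
  unfolding Rs_def by measurable

lemma TT_meas[measurable]:
  assumes g: "L2 H g" shows "TT g \<in> borel_measurable H"
proof -
  have [measurable]: "(\<lambda>x. aa g (zz x)) \<in> borel_measurable H" using aa_comp_meas[OF g] .
  show ?thesis unfolding TT_def[abs_def] by measurable
qed

lemma Gm_nonneg: "0 \<le> (\<integral>y. \<bar>g y\<bar> * norm (mu y) \<partial>H)"
  by (rule integral_nonneg_AE) auto

lemma mu2_int: "integrable H (\<lambda>x. (norm (mu x))\<^sup>2)"
  using L2_norm_mu unfolding L2_def by auto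

lemma TT_bound:
  assumes g: "L2 H g" and K: "KV s K" and x: "x \<in> Rs s"
  shows "\<bar>TT g x\<bar> \<le> (K * (\<integral>y. \<bar>g y\<bar> * norm (mu y) \<partial>H)) * norm (mu x)"
  using T_bound[OF g K] x unfolding TT_def Rs_def by auto

lemma TT_repr:
  assumes g: "L2 H g" and K: "KV s K" and x: "x \<in> Rs s"
  shows "TT g x = (\<integral>y. indicator {y. zz y < zz x} y * (rr g y \<bullet> mu x) \<partial>H)"
  using T_int_repr[OF g K, of "zz x" "mu x"] x unfolding TT_def Rs_def by auto

lemma rr_inner_bound:
  assumes K: "KV s K" and y: "zz y \<le> ereal s"
  shows "\<bar>rr g y \<bullet> w\<bar> \<le> K * (\<bar>g y\<bar> * norm (mu y)) * norm w"
proof -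
  have "\<bar>rr g y \<bullet> w\<bar> \<le> norm (rr g y) * norm w" by (rule Cauchy_Schwarz_ineq2)
  also have "\<dots> \<le> K * (\<bar>g y\<bar> * norm (mu y)) * norm w"
    by (intro mult_right_mono rr_bound[OF K y]) auto
  finally show ?thesis .
qed

lemma KV_pos: "KV s K \<Longrightarrow> K > 0" unfolding KV_def by auto

lemma ind_meas2[measurable]: "(\<lambda>(y, y'). indicator {y'. zz y < zz y'} y' :: real) \<in> borel_measurable (H \<Otimes>\<^sub>M H)"
  unfolding indicator_def by measurable

lemma ind_meas2': "(\<lambda>(y', y). indicator {y'. zz y < zz y'} y' :: real) \<in> borel_measurable (H \<Otimes>\<^sub>M H)"
  unfolding indicator_def by measurable

lemma stepE:
  assumes g: "L2 H g" and K: "KV s K"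
  shows "(\<integral>y. indicator (Rs s) y * (\<integral>y'. indicator (Rs s) y' * indicator {y'. zz y < zz y'} y' * (g y' * (rr g y \<bullet> mu y')) \<partial>H) \<partial>H)
       = (\<integral>y. indicator (Rs s) y * (g y * TT g y) \<partial>H)"
proof -
  have [measurable]: "g \<in> borel_measurable H" using L2_meas[OF g] .
  have [measurable]: "rr g \<in> borel_measurable H" using rr_meas[OF g] .
  define F3 where "F3 y y' = indicator (Rs s) y * (indicator (Rs s) y' * indicator {y'. zz y < zz y'} y' * (g y' * (rr g y \<bullet> mu y')))" for y y'
  have 1: "indicator (Rs s) y * (\<integral>y'. indicator (Rs s) y' * indicator {y'. zz y < zz y'} y' * (g y' * (rr g y \<bullet> mu y')) \<partial>H)
     = (\<integral>y'. F3 y y' \<partial>H)" for y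
    unfolding F3_def by simp
  have Km: "K > 0" using KV_pos[OF K] .
  have 2: "(\<integral>y. \<integral>y'. F3 y y' \<partial>H \<partial>H) = (\<integral>y'. \<integral>y. F3 y y' \<partial>H \<partial>H)"
  proof (rule fub[where u = "\<lambda>y. K * (\<bar>g y\<bar> * norm (mu y))" and v = "\<lambda>y'. \<bar>g y'\<bar> * norm (mu y')"])
    show "(\<lambda>(x, y). F3 x y) \<in> borel_measurable (H \<Otimes>\<^sub>M H)"
      unfolding F3_def indicator_def by measurable
    show "integrable H (\<lambda>y. K * (\<bar>g y\<bar> * norm (mu y)))" using Gm_int[OF g] by simp
    show "integrable H (\<lambda>y'. \<bar>g y'\<bar> * norm (mu y'))" using Gm_int[OF g] .
    fix y y'
    show "\<bar>F3 y y'\<bar> \<le> K * (\<bar>g y\<bar> * norm (mu y)) * (\<bar>g y'\<bar> * norm (mu y'))"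
    proof (cases "y \<in> Rs s \<and> y' \<in> Rs s \<and> zz y < zz y'")
      case True
      then have yR: "zz y \<le> ereal s" by (simp add: Rs_def)
      have "\<bar>F3 y y'\<bar> = \<bar>g y'\<bar> * \<bar>rr g y \<bullet> mu y'\<bar>" using True by (simp add: F3_def abs_mult)
      also have "\<dots> \<le> \<bar>g y'\<bar> * (K * (\<bar>g y\<bar> * norm (mu y)) * norm (mu y'))"
        by (intro mult_left_mono rr_inner_bound[OF K yR]) auto
      finally show ?thesis by (simp add: mult_ac)
    next
      case False
      then have "F3 y y' = 0" by (auto simp: F3_def indicator_def)
      then show ?thesis using Km by simp
    qed
  qed
  have 3: "(\<integral>y. F3 y y' \<partial>H) = indicator (Rs s) y' * (g y' * TT g y')" for y'
  proof (cases "y' \<in> Rs s")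
    case True
    have "(\<integral>y. F3 y y' \<partial>H) = (\<integral>y. g y' * (indicator {y. zz y < zz y'} y * (rr g y \<bullet> mu y')) \<partial>H)"
    proof (rule Bochner_Integration.integral_cong)
      fix y
      show "F3 y y' = g y' * (indicator {y. zz y < zz y'} y * (rr g y \<bullet> mu y'))"
      proof (cases "zz y < zz y'")
        case True
        then have "y \<in> Rs s" using \<open>y' \<in> Rs s\<close> by (auto simp: Rs_def)
        then show ?thesis using True \<open>y' \<in> Rs s\<close> by (simp add: F3_def)
      next
        case False then show ?thesis by (simp add: F3_def)
      qed
    qed simp
    also have "\<dots> = g y' * TT g y'" using TT_repr[OF g K True] by simp
    finally show ?thesis using True by simp
  next
    case False
    then show ?thesis by (simp add: F3_def)
  qed
  show ?thesis unfolding 1 2 3 ..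
qed

lemma S3_sets[measurable]: "{x. a < zz x \<and> b < zz x \<and> zz x \<le> c} \<in> sets H"
  by (simp add: Collect_conj_eq)

lemma stepC:
  assumes g: "L2 H g" and K: "KV s K"
  shows "(\<integral>x. (indicator (Rs s) x * TT g x) * (indicator {y. zz y < zz x} y * (rr g y \<bullet> mu x)) \<partial>H)
   = indicator (Rs s) y * (g y * TT g y + (\<integral>y'. indicator (Rs s) y' * indicator {y'. zz y < zz y'} y' * (g y' * (rr g y \<bullet> mu y')) \<partial>H)
       - rr g y \<bullet> (C (ereal s) *v ap g s))"
proof -
  have [measurable]: "g \<in> borel_measurable H" using L2_meas[OF g] .
  have [measurable]: "rr g \<in> borel_measurable H" using rr_meas[OF g] .
  have Km: "K > 0" using KV_pos[OF K] .
  define F2 where "F2 x y' = (indicator (Rs s) x * indicator {y. zz y < zz x} y * (rr g y \<bullet> mu x)) *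
      (indicator {y'. zz y' < zz x} y' * (rr g y' \<bullet> mu x))" for x y'
  have c1: "(indicator (Rs s) x * TT g x) * (indicator {y. zz y < zz x} y * (rr g y \<bullet> mu x)) = (\<integral>y'. F2 x y' \<partial>H)" for x
  proof (cases "x \<in> Rs s")
    case True
    show ?thesis unfolding F2_def integral_mult_right_zero TT_repr[OF g K True] using True by simp
  next
    case False then show ?thesis by (simp add: F2_def)
  qed
  have c2: "(\<integral>x. \<integral>y'. F2 x y' \<partial>H \<partial>H) = (\<integral>y'. \<integral>x. F2 x y' \<partial>H \<partial>H)"
  proof (rule fub[where u = "\<lambda>x. K * (\<bar>g y\<bar> * norm (mu y)) * K * (norm (mu x))\<^sup>2" and v = "\<lambda>y'. \<bar>g y'\<bar> * norm (mu y')"])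
    show "(\<lambda>(x, y). F2 x y) \<in> borel_measurable (H \<Otimes>\<^sub>M H)"
      unfolding F2_def indicator_def by measurable
    show "integrable H (\<lambda>x. K * (\<bar>g y\<bar> * norm (mu y)) * K * (norm (mu x))\<^sup>2)" using mu2_int by simp
    show "integrable H (\<lambda>y'. \<bar>g y'\<bar> * norm (mu y'))" using Gm_int[OF g] .
    fix x y'
    show "\<bar>F2 x y'\<bar> \<le> K * (\<bar>g y\<bar> * norm (mu y)) * K * (norm (mu x))\<^sup>2 * (\<bar>g y'\<bar> * norm (mu y'))"
    proof (cases "x \<in> Rs s \<and> zz y < zz x \<and> zz y' < zz x")
      case True
      then have yR: "zz y \<le> ereal s" and y'R: "zz y' \<le> ereal s" by (auto simp: Rs_def)
      have "\<bar>F2 x y'\<bar> = \<bar>rr g y \<bullet> mu x\<bar> * \<bar>rr g y' \<bullet> mu x\<bar>" using True by (simp add: F2_def abs_mult)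
      also have "\<dots> \<le> (K * (\<bar>g y\<bar> * norm (mu y)) * norm (mu x)) * (K * (\<bar>g y'\<bar> * norm (mu y')) * norm (mu x))"
        by (intro mult_mono rr_inner_bound[OF K yR] rr_inner_bound[OF K y'R]) (use Km in auto)
      finally show ?thesis by (simp add: power2_eq_square mult_ac)
    next
      case False
      then have "F2 x y' = 0" by (auto simp: F2_def indicator_def)
      then show ?thesis using Km by simp
    qed
  qed
  have c3: "(\<integral>x. F2 x y' \<partial>H) = indicator (Rs s) y * indicator (Rs s) y' * (PP g y y' - rr g y \<bullet> (C (ereal s) *v rr g y'))" for y'
  proof -
    have "(\<integral>x. F2 x y' \<partial>H) = (\<integral>x. indicator {x. zz y < zz x \<and> zz y' < zz x \<and> zz x \<le> ereal s} x * ((rr g y \<bullet> mu x) * (rr g y' \<bullet> mu x)) \<partial>H)"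
      by (rule Bochner_Integration.integral_cong) (auto simp: F2_def indicator_def Rs_def)
    also have "\<dots> = rr g y \<bullet> (Cset {x. zz y < zz x \<and> zz y' < zz x \<and> zz x \<le> ereal s} *v rr g y')"
      by (rule Cset_quad[symmetric]) measurable
    also have "\<dots> = indicator (Rs s) y * indicator (Rs s) y' * (PP g y y' - rr g y \<bullet> (C (ereal s) *v rr g y'))"
      unfolding key_pair Rs_def ..
    finally show ?thesis .
  qed
  have c4: "(\<integral>y'. indicator (Rs s) y * indicator (Rs s) y' * (PP g y y' - rr g y \<bullet> (C (ereal s) *v rr g y')) \<partial>H)
     = indicator (Rs s) y * (g y * TT g y + (\<integral>y'. indicator (Rs s) y' * indicator {y'. zz y < zz y'} y' * (g y' * (rr g y \<bullet> mu y')) \<partial>H)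
       - rr g y \<bullet> (C (ereal s) *v ap g s))"
  proof (cases "y \<in> Rs s")
    case False then show ?thesis by simp
  next
    case True
    then have yR: "zz y \<le> ereal s" by (simp add: Rs_def)
    define f1 where "f1 y' = g y * (indicator {y'. zz y' < zz y} y' * (rr g y' \<bullet> mu y))" for y'
    define f2 where "f2 y' = indicator (Rs s) y' * indicator {y'. zz y < zz y'} y' * (g y' * (rr g y \<bullet> mu y'))" for y'
    define f3 where "f3 y' = (C (ereal s) *v rr g y) \<bullet> (indicator (Rs s) y' *\<^sub>R rr g y')" for y'
    have f1m[measurable]: "f1 \<in> borel_measurable H" unfolding f1_def[abs_def] indicator_def by measurable
    have f2m[measurable]: "f2 \<in> borel_measurable H" unfolding f2_def[abs_def] indicator_def by measurable
    have f3m[measurable]: "f3 \<in> borel_measurable H" unfolding f3_def[abs_def] indicator_def by measurable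
    have f3int: "integrable H (\<lambda>y'. indicator (Rs s) y' *\<^sub>R rr g y')"
      using aa_int_le[OF g K, of "ereal s"] by (simp add: Rs_def)
    have i1: "integrable H f1"
    proof (rule int_bound[where u = "\<lambda>y'. \<bar>g y\<bar> * norm (mu y) * K * (\<bar>g y'\<bar> * norm (mu y'))"])
      show "integrable H (\<lambda>y'. \<bar>g y\<bar> * norm (mu y) * K * (\<bar>g y'\<bar> * norm (mu y')))" using Gm_int[OF g] by simp
      fix y'
      show "norm (f1 y') \<le> \<bar>g y\<bar> * norm (mu y) * K * (\<bar>g y'\<bar> * norm (mu y'))"
      proof (cases "zz y' < zz y")
        case True
        then have "zz y' \<le> ereal s" using yR by auto
        have "norm (f1 y') = \<bar>g y\<bar> * \<bar>rr g y' \<bullet> mu y\<bar>" using True by (simp add: f1_def abs_mult)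
        also have "\<dots> \<le> \<bar>g y\<bar> * (K * (\<bar>g y'\<bar> * norm (mu y')) * norm (mu y))"
          by (intro mult_left_mono rr_inner_bound[OF K \<open>zz y' \<le> ereal s\<close>]) auto
        finally show ?thesis by (simp add: mult_ac)
      next
        case False then show ?thesis using Km by (simp add: f1_def)
      qed
    qed fact
    have i2: "integrable H f2"
    proof (rule int_bound[where u = "\<lambda>y'. K * (\<bar>g y\<bar> * norm (mu y)) * (\<bar>g y'\<bar> * norm (mu y'))"])
      show "integrable H (\<lambda>y'. K * (\<bar>g y\<bar> * norm (mu y)) * (\<bar>g y'\<bar> * norm (mu y')))" using Gm_int[OF g] by simp
      fix y'
      have "norm (f2 y') \<le> \<bar>g y'\<bar> * \<bar>rr g y \<bullet> mu y'\<bar>" by (simp add: f2_def abs_mult indicator_def)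
      also have "\<dots> \<le> \<bar>g y'\<bar> * (K * (\<bar>g y\<bar> * norm (mu y)) * norm (mu y'))"
        by (intro mult_left_mono rr_inner_bound[OF K yR]) auto
      finally show "norm (f2 y') \<le> K * (\<bar>g y\<bar> * norm (mu y)) * (\<bar>g y'\<bar> * norm (mu y'))" by (simp add: mult_ac)
    qed fact
    have i3: "integrable H f3" unfolding f3_def[abs_def]
      by (rule integrable_inner_right) (rule f3int)
    have "(\<integral>y'. indicator (Rs s) y * indicator (Rs s) y' * (PP g y y' - rr g y \<bullet> (C (ereal s) *v rr g y')) \<partial>H)
        = (\<integral>y'. f1 y' + f2 y' - f3 y' \<partial>H)"
    proof (rule integral_cong_AE)
      have m1: "(\<lambda>y'. rr g y' \<bullet> mu y) \<in> borel_measurable H"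
        by (intro borel_measurable_inner) auto
      have m2: "(\<lambda>y'. g y' * (rr g y \<bullet> mu y')) \<in> borel_measurable H"
        by (intro borel_measurable_times borel_measurable_inner) auto
      have m3: "(\<lambda>y'. rr g y \<bullet> (C (ereal s) *v rr g y')) \<in> borel_measurable H"
      proof -
        have "(\<lambda>y'. (C (ereal s) *v rr g y) \<bullet> rr g y') \<in> borel_measurable H"
          by (intro borel_measurable_inner) auto
        moreover have "rr g y \<bullet> (C (ereal s) *v rr g y') = (C (ereal s) *v rr g y) \<bullet> rr g y'" for y'
          using sym_swap[OF C_sym, of "rr g y" "ereal s" "rr g y'"] by (simp add: inner_commute)
        ultimately show ?thesis by simp
      qed
      have m4: "(\<lambda>y'. PP g y y') \<in> borel_measurable H"
        unfolding PP_def by (intro measurable_If m1 m2 borel_measurable_times) (auto intro: zz_le_sets[of "zz y", simplified])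
      show "(\<lambda>y'. indicator (Rs s) y * indicator (Rs s) y' * (PP g y y' - rr g y \<bullet> (C (ereal s) *v rr g y'))) \<in> borel_measurable H"
        by (intro borel_measurable_times borel_measurable_diff m3 m4 borel_measurable_indicator) auto
      show "(\<lambda>y'. f1 y' + f2 y' - f3 y') \<in> borel_measurable H" by measurable
      show "AE y' in H. indicator (Rs s) y * indicator (Rs s) y' * (PP g y y' - rr g y \<bullet> (C (ereal s) *v rr g y')) = f1 y' + f2 y' - f3 y'"
        using AE_zz_ne[of "zz y"]
      proof eventually_elim
        case (elim y')
        have q: "rr g y \<bullet> (C (ereal s) *v rr g y') = (C (ereal s) *v rr g y) \<bullet> rr g y'"
          using sym_swap[OF C_sym, of "rr g y" "ereal s" "rr g y'"] by (simp add: inner_commute)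
        show ?case
        proof (cases "zz y' < zz y")
          case True
          then have "y' \<in> Rs s" using yR by (auto simp: Rs_def)
          moreover have "zz y' \<le> zz y" using True by simp
          ultimately show ?thesis using True \<open>y \<in> Rs s\<close> q by (simp add: PP_def f1_def f2_def f3_def)
        next
          case False
          then have "zz y < zz y'" using elim by auto
          then have "\<not> zz y' \<le> zz y" by simp
          then show ?thesis using False \<open>zz y < zz y'\<close> \<open>y \<in> Rs s\<close> q
            by (simp add: PP_def f1_def f2_def f3_def indicator_def)
        qed
      qed
    qed
    also have "\<dots> = (\<integral>y'. f1 y' \<partial>H) + (\<integral>y'. f2 y' \<partial>H) - (\<integral>y'. f3 y' \<partial>H)"
      using i1 i2 i3 by simp
    also have "(\<integral>y'. f1 y' \<partial>H) = g y * TT g y"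
      unfolding f1_def integral_mult_right_zero TT_repr[OF g K True] ..
    also have "(\<integral>y'. f3 y' \<partial>H) = (C (ereal s) *v rr g y) \<bullet> ap g s"
      unfolding f3_def ap_def by (rule integral_inner_right) (rule f3int)
    also have "\<dots> = rr g y \<bullet> (C (ereal s) *v ap g s)"
      using sym_swap[OF C_sym, of "rr g y" "ereal s" "ap g s"] by (simp add: inner_commute)
    finally show ?thesis using True by (simp add: f2_def)
  qed
  show ?thesis unfolding c1 c2 c3 c4 ..
qed

lemma M2_meas:
  assumes g: "L2 H g"
  shows "(\<lambda>y. \<integral>y'. indicator (Rs s) y' * indicator {y'. zz y < zz y'} y' * (g y' * (rr g y \<bullet> mu y')) \<partial>H) \<in> borel_measurable H"
proof -
  have [measurable]: "g \<in> borel_measurable H" using L2_meas[OF g] .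
  have [measurable]: "rr g \<in> borel_measurable H" using rr_meas[OF g] .
  have "(\<lambda>(y, y'). indicator (Rs s) y' * indicator {y'. zz y < zz y'} y' * (g y' * (rr g y \<bullet> mu y'))) \<in> borel_measurable (H \<Otimes>\<^sub>M H)"
    unfolding indicator_def by measurable
  then show ?thesis
    by (rule P.borel_measurable_lebesgue_integral[of "\<lambda>y y'. indicator (Rs s) y' * indicator {y'. zz y < zz y'} y' * (g y' * (rr g y \<bullet> mu y'))", simplified])
qed

lemma claimA_T2:
  assumes g: "L2 H g" and K: "KV s K"
  shows "(\<integral>x. indicator (Rs s) x * (TT g x)\<^sup>2 \<partial>H)
     = 2 * (\<integral>x. indicator (Rs s) x * (g x * TT g x) \<partial>H) - ap g s \<bullet> (C (ereal s) *v ap g s)"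
proof -
  have [measurable]: "g \<in> borel_measurable H" using L2_meas[OF g] .
  have [measurable]: "rr g \<in> borel_measurable H" using rr_meas[OF g] .
  have [measurable]: "TT g \<in> borel_measurable H" using TT_meas[OF g] .
  have Km: "K > 0" using KV_pos[OF K] .
  define B where "B = K * (\<integral>y. \<bar>g y\<bar> * norm (mu y) \<partial>H)"
  have B0: "0 \<le> B" unfolding B_def using Km Gm_nonneg by simp
  have TB: "x \<in> Rs s \<Longrightarrow> \<bar>TT g x\<bar> \<le> B * norm (mu x)" for x
    using TT_bound[OF g K] unfolding B_def by blast
  define M2 where "M2 y = (\<integral>y'. indicator (Rs s) y' * indicator {y'. zz y < zz y'} y' * (g y' * (rr g y \<bullet> mu y')) \<partial>H)" for y
  have M2m[measurable]: "M2 \<in> borel_measurable H" unfolding M2_def[abs_def] by (rule M2_meas[OF g])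
  define F1 where "F1 x y = (indicator (Rs s) x * TT g x) * (indicator {y. zz y < zz x} y * (rr g y \<bullet> mu x))" for x y
  have a: "indicator (Rs s) x * (TT g x)\<^sup>2 = (\<integral>y. F1 x y \<partial>H)" for x
  proof (cases "x \<in> Rs s")
    case True
    show ?thesis unfolding F1_def integral_mult_right_zero TT_repr[OF g K True, symmetric]
      by (simp add: power2_eq_square)
  next
    case False then show ?thesis by (simp add: F1_def)
  qed
  have b: "(\<integral>x. \<integral>y. F1 x y \<partial>H \<partial>H) = (\<integral>y. \<integral>x. F1 x y \<partial>H \<partial>H)"
  proof (rule fub[where u = "\<lambda>x. B * K * (norm (mu x))\<^sup>2" and v = "\<lambda>y. \<bar>g y\<bar> * norm (mu y)"])
    show "(\<lambda>(x, y). F1 x y) \<in> borel_measurable (H \<Otimes>\<^sub>M H)"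
      unfolding F1_def indicator_def by measurable
    show "integrable H (\<lambda>x. B * K * (norm (mu x))\<^sup>2)" using mu2_int by simp
    show "integrable H (\<lambda>y. \<bar>g y\<bar> * norm (mu y))" using Gm_int[OF g] .
    fix x y
    show "\<bar>F1 x y\<bar> \<le> B * K * (norm (mu x))\<^sup>2 * (\<bar>g y\<bar> * norm (mu y))"
    proof (cases "x \<in> Rs s \<and> zz y < zz x")
      case True
      then have yR: "zz y \<le> ereal s" by (auto simp: Rs_def)
      have "\<bar>F1 x y\<bar> = \<bar>TT g x\<bar> * \<bar>rr g y \<bullet> mu x\<bar>" using True by (simp add: F1_def abs_mult)
      also have "\<dots> \<le> (B * norm (mu x)) * (K * (\<bar>g y\<bar> * norm (mu y)) * norm (mu x))"
        by (intro mult_mono TB rr_inner_bound[OF K yR]) (use True B0 in auto)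
      finally show ?thesis by (simp add: power2_eq_square mult_ac)
    next
      case False
      then have "F1 x y = 0" by (auto simp: F1_def indicator_def)
      then show ?thesis using Km B0 by simp
    qed
  qed
  have c: "(\<integral>x. F1 x y \<partial>H) = indicator (Rs s) y * (g y * TT g y + M2 y - rr g y \<bullet> (C (ereal s) *v ap g s))" for y
    unfolding F1_def M2_def by (rule stepC[OF g K])
  have h1: "integrable H (\<lambda>y. indicator (Rs s) y * (g y * TT g y))"
  proof (rule int_bound[where u = "\<lambda>y. B * (\<bar>g y\<bar> * norm (mu y))"])
    show "integrable H (\<lambda>y. B * (\<bar>g y\<bar> * norm (mu y)))" using Gm_int[OF g] by simp
    show "(\<lambda>y. indicator (Rs s) y * (g y * TT g y)) \<in> borel_measurable H" by measurable
    fix y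
    show "norm (indicator (Rs s) y * (g y * TT g y)) \<le> B * (\<bar>g y\<bar> * norm (mu y))"
    proof (cases "y \<in> Rs s")
      case True
      have "\<bar>g y\<bar> * \<bar>TT g y\<bar> \<le> \<bar>g y\<bar> * (B * norm (mu y))" by (intro mult_left_mono TB True) auto
      then show ?thesis using True by (simp add: abs_mult mult_ac)
    next
      case False then show ?thesis using B0 by simp
    qed
  qed
  have h2: "integrable H (\<lambda>y. indicator (Rs s) y * M2 y)"
  proof (rule int_bound[where u = "\<lambda>y. K * (\<bar>g y\<bar> * norm (mu y)) * (\<integral>y'. \<bar>g y'\<bar> * norm (mu y') \<partial>H)"])
    show "integrable H (\<lambda>y. K * (\<bar>g y\<bar> * norm (mu y)) * (\<integral>y'. \<bar>g y'\<bar> * norm (mu y') \<partial>H))"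
      using Gm_int[OF g] by simp
    show "(\<lambda>y. indicator (Rs s) y * M2 y) \<in> borel_measurable H" by measurable
    fix y
    show "norm (indicator (Rs s) y * M2 y) \<le> K * (\<bar>g y\<bar> * norm (mu y)) * (\<integral>y'. \<bar>g y'\<bar> * norm (mu y') \<partial>H)"
    proof (cases "y \<in> Rs s")
      case True
      then have yR: "zz y \<le> ereal s" by (simp add: Rs_def)
      have bd: "norm (indicator (Rs s) y' * indicator {y'. zz y < zz y'} y' * (g y' * (rr g y \<bullet> mu y')))
          \<le> K * (\<bar>g y\<bar> * norm (mu y)) * (\<bar>g y'\<bar> * norm (mu y'))" for y'
      proof -
        have "norm (indicator (Rs s) y' * indicator {y'. zz y < zz y'} y' * (g y' * (rr g y \<bullet> mu y')))
            \<le> \<bar>g y'\<bar> * \<bar>rr g y \<bullet> mu y'\<bar>" by (simp add: abs_mult indicator_def)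
        also have "\<dots> \<le> \<bar>g y'\<bar> * (K * (\<bar>g y\<bar> * norm (mu y)) * norm (mu y'))"
          by (intro mult_left_mono rr_inner_bound[OF K yR]) auto
        finally show ?thesis by (simp add: mult_ac)
      qed
      have "norm (M2 y) \<le> (\<integral>y'. norm (indicator (Rs s) y' * indicator {y'. zz y < zz y'} y' * (g y' * (rr g y \<bullet> mu y'))) \<partial>H)"
        unfolding M2_def by (rule integral_norm_bound)
      also have "\<dots> \<le> (\<integral>y'. K * (\<bar>g y\<bar> * norm (mu y)) * (\<bar>g y'\<bar> * norm (mu y')) \<partial>H)"
      proof (rule integral_mono)
        show "integrable H (\<lambda>y'. K * (\<bar>g y\<bar> * norm (mu y)) * (\<bar>g y'\<bar> * norm (mu y')))" using Gm_int[OF g] by simp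
        show "integrable H (\<lambda>y'. norm (indicator (Rs s) y' * indicator {y'. zz y < zz y'} y' * (g y' * (rr g y \<bullet> mu y'))))"
        proof (rule int_bound[where u = "\<lambda>y'. K * (\<bar>g y\<bar> * norm (mu y)) * (\<bar>g y'\<bar> * norm (mu y'))"])
          show "integrable H (\<lambda>y'. K * (\<bar>g y\<bar> * norm (mu y)) * (\<bar>g y'\<bar> * norm (mu y')))" using Gm_int[OF g] by simp
          show "(\<lambda>y'. norm (indicator (Rs s) y' * indicator {y'. zz y < zz y'} y' * (g y' * (rr g y \<bullet> mu y')))) \<in> borel_measurable H"
            unfolding indicator_def by measurable
        qed (use bd in simp)
      qed (rule bd)
      also have "\<dots> = K * (\<bar>g y\<bar> * norm (mu y)) * (\<integral>y'. \<bar>g y'\<bar> * norm (mu y') \<partial>H)" by simp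
      finally show ?thesis using True by simp
    next
      case False then show ?thesis using Km Gm_nonneg by simp
    qed
  qed
  have apint: "integrable H (\<lambda>y. indicator (Rs s) y *\<^sub>R rr g y)"
    using aa_int_le[OF g K, of "ereal s"] by (simp add: Rs_def)
  have h3: "integrable H (\<lambda>y. indicator (Rs s) y * (rr g y \<bullet> w))" for w
    using integrable_inner_left[OF apint, of w] by simp
  have f: "(\<integral>y. indicator (Rs s) y * (rr g y \<bullet> w) \<partial>H) = ap g s \<bullet> w" for w
  proof -
    have "(\<integral>y. (indicator (Rs s) y *\<^sub>R rr g y) \<bullet> w \<partial>H) = ap g s \<bullet> w"
      unfolding ap_def by (rule integral_inner_left) (rule apint)
    then show ?thesis by simp
  qed
  have "(\<integral>x. indicator (Rs s) x * (TT g x)\<^sup>2 \<partial>H) = (\<integral>y. indicator (Rs s) y * (g y * TT g y + M2 y - rr g y \<bullet> (C (ereal s) *v ap g s)) \<partial>H)"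
    unfolding a b c ..
  also have "\<dots> = (\<integral>y. indicator (Rs s) y * (g y * TT g y) + indicator (Rs s) y * M2 y - indicator (Rs s) y * (rr g y \<bullet> (C (ereal s) *v ap g s)) \<partial>H)"
    by (simp add: algebra_simps)
  also have "\<dots> = (\<integral>y. indicator (Rs s) y * (g y * TT g y) \<partial>H) + (\<integral>y. indicator (Rs s) y * M2 y \<partial>H)
      - (\<integral>y. indicator (Rs s) y * (rr g y \<bullet> (C (ereal s) *v ap g s)) \<partial>H)"
    using h1 h2 h3 by simp
  also have "(\<integral>y. indicator (Rs s) y * M2 y \<partial>H) = (\<integral>y. indicator (Rs s) y * (g y * TT g y) \<partial>H)"
    unfolding M2_def by (rule stepE[OF g K])
  also have "(\<integral>y. indicator (Rs s) y * (rr g y \<bullet> (C (ereal s) *v ap g s)) \<partial>H) = ap g s \<bullet> (C (ereal s) *v ap g s)"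
    by (rule f)
  finally show ?thesis by simp
qed

lemma Kop_TT: "L2 H g \<Longrightarrow> Kop H mu A g x = g x - TT g x"
  unfolding Kop_def TT_def using Top_eq by simp

lemma TT2_int:
  assumes g: "L2 H g" and K: "KV s K"
  shows "integrable H (\<lambda>x. indicator (Rs s) x * (TT g x)\<^sup>2)"
    and "integrable H (\<lambda>x. indicator (Rs s) x * (g x * TT g x))"
    and "integrable H (\<lambda>x. indicator (Rs s) x * (TT g x * mu x $ i))"
proof -
  have [measurable]: "g \<in> borel_measurable H" using L2_meas[OF g] .
  have [measurable]: "TT g \<in> borel_measurable H" using TT_meas[OF g] .
  have Km: "K > 0" using KV_pos[OF K] .
  define B where "B = K * (\<integral>y. \<bar>g y\<bar> * norm (mu y) \<partial>H)"
  have B0: "0 \<le> B" unfolding B_def using Km Gm_nonneg by simp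
  have TB: "x \<in> Rs s \<Longrightarrow> \<bar>TT g x\<bar> \<le> B * norm (mu x)" for x
    using TT_bound[OF g K] unfolding B_def by blast
  show "integrable H (\<lambda>x. indicator (Rs s) x * (TT g x)\<^sup>2)"
  proof (rule int_bound[where u = "\<lambda>x. B\<^sup>2 * (norm (mu x))\<^sup>2"])
    show "integrable H (\<lambda>x. B\<^sup>2 * (norm (mu x))\<^sup>2)" using mu2_int by simp
    show "(\<lambda>x. indicator (Rs s) x * (TT g x)\<^sup>2) \<in> borel_measurable H" by measurable
    fix x
    show "norm (indicator (Rs s) x * (TT g x)\<^sup>2) \<le> B\<^sup>2 * (norm (mu x))\<^sup>2"
    proof (cases "x \<in> Rs s")
      case True
      have "\<bar>TT g x\<bar>\<^sup>2 \<le> (B * norm (mu x))\<^sup>2" by (intro power_mono TB True) auto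
      then show ?thesis using True by (simp add: power_mult_distrib)
    qed simp
  qed
  show "integrable H (\<lambda>x. indicator (Rs s) x * (g x * TT g x))"
  proof (rule int_bound[where u = "\<lambda>y. B * (\<bar>g y\<bar> * norm (mu y))"])
    show "integrable H (\<lambda>y. B * (\<bar>g y\<bar> * norm (mu y)))" using Gm_int[OF g] by simp
    show "(\<lambda>y. indicator (Rs s) y * (g y * TT g y)) \<in> borel_measurable H" by measurable
    fix y
    show "norm (indicator (Rs s) y * (g y * TT g y)) \<le> B * (\<bar>g y\<bar> * norm (mu y))"
    proof (cases "y \<in> Rs s")
      case True
      have "\<bar>g y\<bar> * \<bar>TT g y\<bar> \<le> \<bar>g y\<bar> * (B * norm (mu y))" by (intro mult_left_mono TB True) auto
      then show ?thesis using True by (simp add: abs_mult mult_ac)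
    next
      case False then show ?thesis using B0 by simp
    qed
  qed
  show "integrable H (\<lambda>x. indicator (Rs s) x * (TT g x * mu x $ i))"
  proof (rule int_bound[where u = "\<lambda>x. B * (norm (mu x))\<^sup>2"])
    show "integrable H (\<lambda>x. B * (norm (mu x))\<^sup>2)" using mu2_int by simp
    show "(\<lambda>x. indicator (Rs s) x * (TT g x * mu x $ i)) \<in> borel_measurable H" by measurable
    fix x
    show "norm (indicator (Rs s) x * (TT g x * mu x $ i)) \<le> B * (norm (mu x))\<^sup>2"
    proof (cases "x \<in> Rs s")
      case True
      have "\<bar>TT g x\<bar> * \<bar>mu x $ i\<bar> \<le> (B * norm (mu x)) * norm (mu x)"
        by (intro mult_mono TB True component_le_norm_cart) (use B0 in auto)
      then show ?thesis using True by (simp add: abs_mult power2_eq_square mult_ac)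
    next
      case False then show ?thesis using B0 by simp
    qed
  qed
qed

lemma claimA:
  assumes g: "L2 H g" and K: "KV s K"
  shows "(\<integral>x. indicator (Rs s) x * (Kop H mu A g x)\<^sup>2 \<partial>H)
     = (\<integral>x. indicator (Rs s) x * (g x)\<^sup>2 \<partial>H) - ap g s \<bullet> (C (ereal s) *v ap g s)"
proof -
  have g2: "integrable H (\<lambda>x. indicator (Rs s) x * (g x)\<^sup>2)"
    using g unfolding L2_def by (intro int_ind_real) auto
  have "(\<integral>x. indicator (Rs s) x * (Kop H mu A g x)\<^sup>2 \<partial>H)
      = (\<integral>x. indicator (Rs s) x * (g x)\<^sup>2 - 2 * (indicator (Rs s) x * (g x * TT g x)) + indicator (Rs s) x * (TT g x)\<^sup>2 \<partial>H)"
    by (rule Bochner_Integration.integral_cong) (auto simp: Kop_TT[OF g] power2_diff algebra_simps)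
  also have "\<dots> = (\<integral>x. indicator (Rs s) x * (g x)\<^sup>2 \<partial>H) - 2 * (\<integral>x. indicator (Rs s) x * (g x * TT g x) \<partial>H)
      + (\<integral>x. indicator (Rs s) x * (TT g x)\<^sup>2 \<partial>H)"
    using g2 TT2_int[OF g K] by simp
  also have "\<dots> = (\<integral>x. indicator (Rs s) x * (g x)\<^sup>2 \<partial>H) - ap g s \<bullet> (C (ereal s) *v ap g s)"
    unfolding claimA_T2[OF g K] by simp
  finally show ?thesis .
qed

lemma claimB:
  assumes g: "L2 H g" and K: "KV s K"
  shows "(\<integral>x. indicator (Rs s) x * (Kop H mu A g x * mu x $ i) \<partial>H) = (C (ereal s) *v ap g s) $ i"
proof -
  have [measurable]: "g \<in> borel_measurable H" using L2_meas[OF g] .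
  have [measurable]: "rr g \<in> borel_measurable H" using rr_meas[OF g] .
  have [measurable]: "TT g \<in> borel_measurable H" using TT_meas[OF g] .
  have Km: "K > 0" using KV_pos[OF K] .
  let ?e = "axis i 1 :: real^'q"
  define G where "G x y = (indicator (Rs s) x * mu x $ i) * (indicator {y. zz y < zz x} y * (rr g y \<bullet> mu x))" for x y
  have a: "indicator (Rs s) x * (TT g x * mu x $ i) = (\<integral>y. G x y \<partial>H)" for x
  proof (cases "x \<in> Rs s")
    case True
    show ?thesis unfolding G_def integral_mult_right_zero TT_repr[OF g K True, symmetric] by simp
  next
    case False then show ?thesis by (simp add: G_def)
  qed
  have b: "(\<integral>x. \<integral>y. G x y \<partial>H \<partial>H) = (\<integral>y. \<integral>x. G x y \<partial>H \<partial>H)"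
  proof (rule fub[where u = "\<lambda>x. K * (norm (mu x))\<^sup>2" and v = "\<lambda>y. \<bar>g y\<bar> * norm (mu y)"])
    show "(\<lambda>(x, y). G x y) \<in> borel_measurable (H \<Otimes>\<^sub>M H)"
      unfolding G_def indicator_def by measurable
    show "integrable H (\<lambda>x. K * (norm (mu x))\<^sup>2)" using mu2_int by simp
    show "integrable H (\<lambda>y. \<bar>g y\<bar> * norm (mu y))" using Gm_int[OF g] .
    fix x y
    show "\<bar>G x y\<bar> \<le> K * (norm (mu x))\<^sup>2 * (\<bar>g y\<bar> * norm (mu y))"
    proof (cases "x \<in> Rs s \<and> zz y < zz x")
      case True
      then have yR: "zz y \<le> ereal s" by (auto simp: Rs_def)
      have "\<bar>G x y\<bar> = \<bar>mu x $ i\<bar> * \<bar>rr g y \<bullet> mu x\<bar>" using True by (simp add: G_def abs_mult)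
      also have "\<dots> \<le> norm (mu x) * (K * (\<bar>g y\<bar> * norm (mu y)) * norm (mu x))"
        by (intro mult_mono component_le_norm_cart rr_inner_bound[OF K yR]) auto
      finally show ?thesis by (simp add: power2_eq_square mult_ac)
    next
      case False
      then have "G x y = 0" by (auto simp: G_def indicator_def)
      then show ?thesis using Km by simp
    qed
  qed
  have c: "(\<integral>x. G x y \<partial>H) = indicator (Rs s) y * (g y * mu y $ i - rr g y \<bullet> (C (ereal s) *v ?e))" for y
  proof -
    have "(\<integral>x. G x y \<partial>H) = (\<integral>x. indicator {x. zz y < zz x \<and> zz x \<le> ereal s} x * ((rr g y \<bullet> mu x) * (?e \<bullet> mu x)) \<partial>H)"
      by (rule Bochner_Integration.integral_cong)
         (auto simp: G_def indicator_def Rs_def inner_axis inner_commute[of "axis i 1"])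
    also have "\<dots> = rr g y \<bullet> (Cset {x. zz y < zz x \<and> zz x \<le> ereal s} *v ?e)"
      by (rule Cset_quad[symmetric]) (simp add: Collect_conj_eq)
    also have "\<dots> = indicator (Rs s) y * (g y * mu y $ i - rr g y \<bullet> (C (ereal s) *v ?e))"
    proof (cases "y \<in> Rs s")
      case True
      then have yR: "zz y \<le> ereal s" by (simp add: Rs_def)
      then have ne: "zz y \<noteq> \<infinity>" by auto
      show ?thesis unfolding Cset_interval using yR True rr_C[OF ne, of g ?e]
        by (simp add: matrix_vector_mult_diff_rdistrib inner_diff_right inner_commute[of "axis i 1"] inner_axis)
    next
      case False
      then have "\<not> zz y \<le> ereal s" by (simp add: Rs_def)
      then show ?thesis unfolding Cset_interval using False by simp
    qed
    finally show ?thesis .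
  qed
  have apint: "integrable H (\<lambda>y. indicator (Rs s) y *\<^sub>R rr g y)"
    using aa_int_le[OF g K, of "ereal s"] by (simp add: Rs_def)
  have h3: "integrable H (\<lambda>y. indicator (Rs s) y * (rr g y \<bullet> w))" for w
    using integrable_inner_left[OF apint, of w] by simp
  have f: "(\<integral>y. indicator (Rs s) y * (rr g y \<bullet> w) \<partial>H) = ap g s \<bullet> w" for w
  proof -
    have "(\<integral>y. (indicator (Rs s) y *\<^sub>R rr g y) \<bullet> w \<partial>H) = ap g s \<bullet> w"
      unfolding ap_def by (rule integral_inner_left) (rule apint)
    then show ?thesis by simp
  qed
  have gmu: "integrable H (\<lambda>y. indicator (Rs s) y * (g y * mu y $ i))"
    by (intro int_ind_real L2_int_mult[OF g L2_mu]) auto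
  have T: "(\<integral>x. indicator (Rs s) x * (TT g x * mu x $ i) \<partial>H)
      = (\<integral>y. indicator (Rs s) y * (g y * mu y $ i) \<partial>H) - ap g s \<bullet> (C (ereal s) *v ?e)"
  proof -
    have "(\<integral>x. indicator (Rs s) x * (TT g x * mu x $ i) \<partial>H)
        = (\<integral>y. indicator (Rs s) y * (g y * mu y $ i) - indicator (Rs s) y * (rr g y \<bullet> (C (ereal s) *v ?e)) \<partial>H)"
      unfolding a b c by (simp add: algebra_simps)
    also have "\<dots> = (\<integral>y. indicator (Rs s) y * (g y * mu y $ i) \<partial>H) - ap g s \<bullet> (C (ereal s) *v ?e)"
      using gmu h3 f by simp
    finally show ?thesis .
  qed
  have "(\<integral>x. indicator (Rs s) x * (Kop H mu A g x * mu x $ i) \<partial>H)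
      = (\<integral>x. indicator (Rs s) x * (g x * mu x $ i) - indicator (Rs s) x * (TT g x * mu x $ i) \<partial>H)"
    by (rule Bochner_Integration.integral_cong) (auto simp: Kop_TT[OF g] algebra_simps)
  also have "\<dots> = (\<integral>x. indicator (Rs s) x * (g x * mu x $ i) \<partial>H) - (\<integral>x. indicator (Rs s) x * (TT g x * mu x $ i) \<partial>H)"
    using gmu TT2_int(3)[OF g K] by simp
  also have "\<dots> = ap g s \<bullet> (C (ereal s) *v ?e)" unfolding T by simp
  also have "\<dots> = ?e \<bullet> (C (ereal s) *v ap g s)" by (rule sym_swap[OF C_sym])
  also have "\<dots> = (C (ereal s) *v ap g s) $ i" by (simp add: inner_commute[of "axis i 1"] inner_axis)
  finally show ?thesis .
qed

lemma ev_in_Rs: "zz x \<noteq> \<infinity> \<Longrightarrow> eventually (\<lambda>n. zz x \<le> ereal (real n)) sequentially"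
proof (cases "zz x")
  case (real r)
  obtain N :: nat where "r \<le> real N" using real_arch_simple by blast
  then show ?thesis using real
    by (intro eventually_sequentiallyI[of N]) (auto intro: order_trans)
qed auto

lemma lim_Rs_int:
  fixes f :: "real^'p \<Rightarrow> real"
  assumes f: "integrable H f"
  shows "(\<lambda>n. \<integral>x. indicator (Rs (real n)) x * f x \<partial>H) \<longlonglongrightarrow> (\<integral>x. f x \<partial>H)"
proof (rule integral_dominated_convergence[where w = "\<lambda>x. norm (f x)"])
  show "f \<in> borel_measurable H" using f by auto
  show "(\<lambda>x. indicator (Rs (real n)) x * f x) \<in> borel_measurable H" for n using f by auto
  show "integrable H (\<lambda>x. norm (f x))" using f by auto
  show "AE x in H. (\<lambda>n. indicator (Rs (real n)) x * f x) \<longlonglongrightarrow> f x"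
    using AE_zz_ne[of \<infinity>]
  proof eventually_elim
    case (elim x)
    have "eventually (\<lambda>n. indicator (Rs (real n)) x * f x = f x) sequentially"
      using ev_in_Rs[OF elim] by eventually_elim (simp add: Rs_def)
    then show ?case by (rule tendsto_eventually)
  qed
  show "AE x in H. norm (indicator (Rs (real n)) x * f x) \<le> norm (f x)" for n
    by (intro AE_I2) (auto simp: indicator_def)
qed

lemma lim_tail_int:
  fixes f :: "real^'p \<Rightarrow> real"
  assumes f: "integrable H f"
  shows "(\<lambda>n. \<integral>x. indicator {x. ereal (real n) < zz x} x * f x \<partial>H) \<longlonglongrightarrow> 0"
proof -
  have "(\<lambda>n. \<integral>x. indicator {x. ereal (real n) < zz x} x * f x \<partial>H) \<longlonglongrightarrow> (\<integral>x. 0 \<partial>H)"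
  proof (rule integral_dominated_convergence[where w = "\<lambda>x. norm (f x)"])
    show "(\<lambda>x. indicator {x. ereal (real n) < zz x} x * f x) \<in> borel_measurable H" for n using f by auto
    show "integrable H (\<lambda>x. norm (f x))" using f by auto
    show "AE x in H. (\<lambda>n. indicator {x. ereal (real n) < zz x} x * f x) \<longlonglongrightarrow> 0"
      using AE_zz_ne[of \<infinity>]
    proof eventually_elim
      case (elim x)
      have "eventually (\<lambda>n. indicator {x. ereal (real n) < zz x} x * f x = 0) sequentially"
        using ev_in_Rs[OF elim] by eventually_elim (simp add: indicator_def)
      then show ?case by (rule tendsto_eventually)
    qed
    show "AE x in H. norm (indicator {x. ereal (real n) < zz x} x * f x) \<le> norm (f x)" for n
      by (intro AE_I2) (auto simp: indicator_def)
  qed simp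
  then show ?thesis by simp
qed

lemma C_lim: "(\<lambda>n. C (ereal (real n)) $ i $ j) \<longlonglongrightarrow> 0"
proof -
  have "C (ereal (real n)) $ i $ j = (\<integral>x. indicator {x. ereal (real n) < zz x} x * (mu x $ i * mu x $ j) \<partial>H)" for n
    by (simp add: C_eq Cset_def)
  then show ?thesis using lim_tail_int[OF L2_int_mult[OF L2_mu L2_mu, of i j]] by simp
qed

lemma quad_lim: "(\<lambda>n. u \<bullet> (C (ereal (real n)) *v u)) \<longlonglongrightarrow> 0"
proof -
  have eq: "u \<bullet> (M *v u) = (\<Sum>i\<in>UNIV. \<Sum>j\<in>UNIV. u $ i * M $ i $ j * u $ j)" for M :: "real^'q^'q"
    by (simp add: inner_vec_def matrix_vector_mult_def sum_distrib_left mult_ac)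
  have "(\<lambda>n. \<Sum>i\<in>UNIV. \<Sum>j\<in>UNIV. u $ i * C (ereal (real n)) $ i $ j * u $ j) \<longlonglongrightarrow> (\<Sum>i\<in>UNIV. \<Sum>j\<in>UNIV. u $ i * 0 * u $ j)"
    by (intro tendsto_sum tendsto_mult tendsto_const C_lim)
  then show ?thesis unfolding eq by simp
qed

lemma Q_nonneg: "0 \<le> ap g s \<bullet> (C (ereal s) *v ap g s)"
  by (rule C_psd)

lemma Kop2R_int:
  assumes g: "L2 H g" and K: "KV s K"
  shows "integrable H (\<lambda>x. indicator (Rs s) x * (Kop H mu A g x)\<^sup>2)"
proof -
  have g2: "integrable H (\<lambda>x. indicator (Rs s) x * (g x)\<^sup>2)"
    using g unfolding L2_def by (intro int_ind_real) auto
  have "integrable H (\<lambda>x. indicator (Rs s) x * (g x)\<^sup>2 - 2 * (indicator (Rs s) x * (g x * TT g x)) + indicator (Rs s) x * (TT g x)\<^sup>2)"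
    using g2 TT2_int[OF g K] by auto
  moreover have "indicator (Rs s) x * (Kop H mu A g x)\<^sup>2 = indicator (Rs s) x * (g x)\<^sup>2 - 2 * (indicator (Rs s) x * (g x * TT g x)) + indicator (Rs s) x * (TT g x)\<^sup>2" for x
    by (auto simp: Kop_TT[OF g] power2_diff algebra_simps)
  ultimately show ?thesis by simp
qed

lemma Q_le:
  assumes g: "L2 H g"
  shows "ap g s \<bullet> (C (ereal s) *v ap g s) \<le> (\<integral>x. indicator (Rs s) x * (g x)\<^sup>2 \<partial>H)"
proof -
  obtain K where K: "KV s K" using KV_ex by blast
  have "0 \<le> (\<integral>x. indicator (Rs s) x * (Kop H mu A g x)\<^sup>2 \<partial>H)"
    by (rule integral_nonneg_AE) auto
  then show ?thesis unfolding claimA[OF g K] by simp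
qed

lemma ap_split:
  assumes g: "L2 H g" and s0: "s0 \<le> s"
  shows "ap g s = ap g s0 + ap (\<lambda>y. indicator {y. ereal s0 < zz y} y * g y) s"
proof -
  have [measurable]: "g \<in> borel_measurable H" using L2_meas[OF g] .
  obtain K where K: "KV s K" using KV_ex by blast
  let ?g2 = "\<lambda>y. indicator {y. ereal s0 < zz y} y * g y"
  have g2: "L2 H ?g2"
  proof -
    have "integrable H (\<lambda>y. indicator {y. ereal s0 < zz y} y * (g y)\<^sup>2)"
      using g unfolding L2_def by (intro int_ind_real) auto
    moreover have "(?g2 y)\<^sup>2 = indicator {y. ereal s0 < zz y} y * (g y)\<^sup>2" for y
      by (simp add: indicator_def)
    ultimately show ?thesis unfolding L2_def by simp
  qed
  have i1: "integrable H (\<lambda>y. indicator (Rs s0) y *\<^sub>R rr g y)"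
    using aa_int_le[OF g K, of "ereal s0"] s0 by (simp add: Rs_def)
  have i2: "integrable H (\<lambda>y. indicator (Rs s) y *\<^sub>R rr ?g2 y)"
    using aa_int_le[OF g2 K, of "ereal s"] by (simp add: Rs_def)
  have "ap g s = (\<integral>y. indicator (Rs s0) y *\<^sub>R rr g y + indicator (Rs s) y *\<^sub>R rr ?g2 y \<partial>H)"
    unfolding ap_def
  proof (rule Bochner_Integration.integral_cong)
    fix y
    have es: "zz y \<le> ereal s0 \<Longrightarrow> zz y \<le> ereal s" using s0 order_trans[of "zz y" "ereal s0" "ereal s"] by simp
    show "indicator (Rs s) y *\<^sub>R rr g y = indicator (Rs s0) y *\<^sub>R rr g y + indicator (Rs s) y *\<^sub>R rr ?g2 y"
      using es by (auto simp: indicator_def Rs_def rr_def)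
  qed simp
  also have "\<dots> = ap g s0 + ap ?g2 s"
    unfolding ap_def using i1 i2 by simp
  finally show ?thesis .
qed

lemma psd_sum_le:
  fixes M :: "real^'n^'n"
  assumes sym: "transpose M = M" and psd: "\<And>x. 0 \<le> x \<bullet> (M *v x)"
  shows "(u + v) \<bullet> (M *v (u + v)) \<le> 2 * (u \<bullet> (M *v u)) + 2 * (v \<bullet> (M *v v))"
proof -
  have "(u + 1 *\<^sub>R v) \<bullet> (M *v (u + 1 *\<^sub>R v)) = u \<bullet> (M *v u) + 2 * 1 * (u \<bullet> (M *v v)) + 1\<^sup>2 * (v \<bullet> (M *v v))"
    by (rule quad_expand[OF sym])
  moreover have "(u + (-1) *\<^sub>R v) \<bullet> (M *v (u + (-1) *\<^sub>R v)) = u \<bullet> (M *v u) + 2 * (-1) * (u \<bullet> (M *v v)) + (-1)\<^sup>2 * (v \<bullet> (M *v v))"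
    by (rule quad_expand[OF sym])
  moreover have "0 \<le> (u + (-1) *\<^sub>R v) \<bullet> (M *v (u + (-1) *\<^sub>R v))" by (rule psd)
  ultimately show ?thesis by simp
qed

lemma Q_lim:
  assumes g: "L2 H g"
  shows "(\<lambda>n. ap g (real n) \<bullet> (C (ereal (real n)) *v ap g (real n))) \<longlonglongrightarrow> 0"
proof (rule LIMSEQ_I)
  fix r :: real assume r: "0 < r"
  have gi: "integrable H (\<lambda>x. (g x)\<^sup>2)" using g unfolding L2_def by auto
  from lim_tail_int[OF gi] r obtain N0 where N0: "\<And>n. n \<ge> N0 \<Longrightarrow> norm ((\<integral>x. indicator {x. ereal (real n) < zz x} x * (g x)\<^sup>2 \<partial>H) - 0) < r / 8"
    unfolding LIMSEQ_def dist_real_def by (metis divide_pos_pos zero_less_numeral real_norm_def)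
  define u where "u = ap g (real N0)"
  from quad_lim[of u] r obtain N1 where N1: "\<And>n. n \<ge> N1 \<Longrightarrow> norm (u \<bullet> (C (ereal (real n)) *v u) - 0) < r / 8"
    unfolding LIMSEQ_def dist_real_def by (metis divide_pos_pos zero_less_numeral real_norm_def)
  show "\<exists>no. \<forall>n\<ge>no. norm (ap g (real n) \<bullet> (C (ereal (real n)) *v ap g (real n)) - 0) < r"
  proof (intro exI[of _ "max N0 N1"] allI impI)
    fix n assume n: "max N0 N1 \<le> n"
    let ?g2 = "\<lambda>y. indicator {y. ereal (real N0) < zz y} y * g y"
    have g2: "L2 H ?g2"
    proof -
      have "integrable H (\<lambda>y. indicator {y. ereal (real N0) < zz y} y * (g y)\<^sup>2)"
        using gi by (intro int_ind_real) auto
      moreover have "(?g2 y)\<^sup>2 = indicator {y. ereal (real N0) < zz y} y * (g y)\<^sup>2" for y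
        by (simp add: indicator_def)
      ultimately show ?thesis using L2_meas[OF g] unfolding L2_def by simp
    qed
    define v where "v = ap ?g2 (real n)"
    have split: "ap g (real n) = u + v" unfolding u_def v_def using ap_split[OF g, of "real N0" "real n"] n by simp
    have "ap g (real n) \<bullet> (C (ereal (real n)) *v ap g (real n)) \<le> 2 * (u \<bullet> (C (ereal (real n)) *v u)) + 2 * (v \<bullet> (C (ereal (real n)) *v v))"
      unfolding split by (rule psd_sum_le[OF C_sym C_psd])
    also have "v \<bullet> (C (ereal (real n)) *v v) \<le> (\<integral>x. indicator (Rs (real n)) x * (?g2 x)\<^sup>2 \<partial>H)"
      unfolding v_def by (rule Q_le[OF g2])
    also have "\<dots> \<le> (\<integral>x. indicator {x. ereal (real N0) < zz x} x * (g x)\<^sup>2 \<partial>H)"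
    proof (rule integral_mono)
      show "integrable H (\<lambda>x. indicator (Rs (real n)) x * (?g2 x)\<^sup>2)"
        using g2 unfolding L2_def by (intro int_ind_real) auto
      show "integrable H (\<lambda>x. indicator {x. ereal (real N0) < zz x} x * (g x)\<^sup>2)"
        using gi by (intro int_ind_real) auto
    qed (auto simp: indicator_def)
    finally have le: "ap g (real n) \<bullet> (C (ereal (real n)) *v ap g (real n)) \<le>
        2 * (u \<bullet> (C (ereal (real n)) *v u)) + 2 * (\<integral>x. indicator {x. ereal (real N0) < zz x} x * (g x)\<^sup>2 \<partial>H)"
      by simp
    have "u \<bullet> (C (ereal (real n)) *v u) < r / 8" using N1[of n] n by simp
    moreover have "(\<integral>x. indicator {x. ereal (real N0) < zz x} x * (g x)\<^sup>2 \<partial>H) < r / 8" using N0[of N0] by simp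
    moreover have "0 \<le> ap g (real n) \<bullet> (C (ereal (real n)) *v ap g (real n))" by (rule Q_nonneg)
    ultimately show "norm (ap g (real n) \<bullet> (C (ereal (real n)) *v ap g (real n)) - 0) < r"
      using le by simp
  qed
qed

end


context kh begin
interpretation P: prob_space H by (rule H_prob)
lemma part1_norm:
  assumes g: "L2 H g"
  shows "L2 H (Kop H mu A g)" "(\<integral>x. (Kop H mu A g x)\<^sup>2 \<partial>H) = (\<integral>x. (g x)\<^sup>2 \<partial>H)"
proof -
  have [measurable]: "Kop H mu A g \<in> borel_measurable H" using Kop_meas[OF g] .
  have gi: "integrable H (\<lambda>x. (g x)\<^sup>2)" using g unfolding L2_def by auto
  define f where "f n x = indicator (Rs (real n)) x * (Kop H mu A g x)\<^sup>2" for n x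
  have fi: "integrable H (f n)" for n
  proof -
    obtain K where K: "KV (real n) K" using KV_ex by blast
    show ?thesis unfolding f_def[abs_def] by (rule Kop2R_int[OF g K])
  qed
  have fint: "(\<integral>x. f n x \<partial>H) = (\<integral>x. indicator (Rs (real n)) x * (g x)\<^sup>2 \<partial>H) - ap g (real n) \<bullet> (C (ereal (real n)) *v ap g (real n))" for n
  proof -
    obtain K where K: "KV (real n) K" using KV_ex by blast
    show ?thesis unfolding f_def by (rule claimA[OF g K])
  qed
  have mono: "AE x in H. mono (\<lambda>n. f n x)"
  proof (rule AE_I2)
    fix x
    show "mono (\<lambda>n. f n x)"
    proof (rule monoI)
      fix m n :: nat assume "m \<le> n"
      then have "indicator (Rs (real m)) x \<le> (indicator (Rs (real n)) x :: real)"
        by (auto simp: indicator_def Rs_def intro: order_trans)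
      then show "f m x \<le> f n x" unfolding f_def by (intro mult_right_mono) auto
    qed
  qed
  have lim: "AE x in H. (\<lambda>n. f n x) \<longlonglongrightarrow> (Kop H mu A g x)\<^sup>2"
    using AE_zz_ne[of \<infinity>]
  proof eventually_elim
    case (elim x)
    have "eventually (\<lambda>n. f n x = (Kop H mu A g x)\<^sup>2) sequentially"
      using ev_in_Rs[OF elim] by eventually_elim (simp add: Rs_def f_def)
    then show ?case by (rule tendsto_eventually)
  qed
  have ilim: "(\<lambda>n. \<integral>x. f n x \<partial>H) \<longlonglongrightarrow> (\<integral>x. (g x)\<^sup>2 \<partial>H) - 0"
    unfolding fint by (intro tendsto_diff lim_Rs_int[OF gi] Q_lim[OF g])
  have um: "(\<lambda>x. (Kop H mu A g x)\<^sup>2) \<in> borel_measurable H" by measurable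
  have "integrable H (\<lambda>x. (Kop H mu A g x)\<^sup>2)"
    by (rule integrable_monotone_convergence[OF fi mono lim ilim um])
  then show "L2 H (Kop H mu A g)" unfolding L2_def by simp
  show "(\<integral>x. (Kop H mu A g x)\<^sup>2 \<partial>H) = (\<integral>x. (g x)\<^sup>2 \<partial>H)"
    using integral_monotone_convergence[OF fi mono lim ilim um] by simp
qed

lemma part1_orth:
  assumes g: "L2 H g"
  shows "(\<integral>x. Kop H mu A g x * mu x $ i \<partial>H) = 0"
proof -
  have ki: "integrable H (\<lambda>x. Kop H mu A g x * mu x $ i)"
    by (rule L2_int_mult[OF part1_norm(1)[OF g] L2_mu])
  have eq: "(\<integral>x. indicator (Rs (real n)) x * (Kop H mu A g x * mu x $ i) \<partial>H) = (C (ereal (real n)) *v ap g (real n)) $ i" for n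
  proof -
    obtain K where K: "KV (real n) K" using KV_ex by blast
    show ?thesis by (rule claimB[OF g K])
  qed
  let ?e = "axis i 1 :: real^'q"
  define c where "c = ?e \<bullet> (C (-\<infinity>) *v ?e)"
  have c0: "0 \<le> c" unfolding c_def by (rule C_psd)
  have bd: "norm ((C (ereal (real n)) *v ap g (real n)) $ i) \<le> sqrt (c * (ap g (real n) \<bullet> (C (ereal (real n)) *v ap g (real n))))" for n
  proof -
    let ?M = "C (ereal (real n))" and ?a = "ap g (real n)"
    have x: "(?M *v ?a) $ i = ?e \<bullet> (?M *v ?a)" by (simp add: inner_commute[of "axis i 1"] inner_axis)
    have "(?e \<bullet> (?M *v ?a))\<^sup>2 \<le> (?e \<bullet> (?M *v ?e)) * (?a \<bullet> (?M *v ?a))"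
      by (rule psd_CS[OF C_sym C_psd])
    also have "\<dots> \<le> c * (?a \<bullet> (?M *v ?a))"
      unfolding c_def by (intro mult_right_mono C_mono C_psd) auto
    finally have "(?e \<bullet> (?M *v ?a))\<^sup>2 \<le> c * (?a \<bullet> (?M *v ?a))" .
    then have "sqrt ((?e \<bullet> (?M *v ?a))\<^sup>2) \<le> sqrt (c * (?a \<bullet> (?M *v ?a)))" by (rule real_sqrt_le_mono)
    then show ?thesis unfolding x by simp
  qed
  have "(\<lambda>n. sqrt (c * (ap g (real n) \<bullet> (C (ereal (real n)) *v ap g (real n))))) \<longlonglongrightarrow> sqrt (c * 0)"
    by (intro tendsto_real_sqrt tendsto_mult tendsto_const Q_lim[OF g])
  then have sq: "(\<lambda>n. sqrt (c * (ap g (real n) \<bullet> (C (ereal (real n)) *v ap g (real n))))) \<longlonglongrightarrow> 0"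
    by simp
  have ev: "eventually (\<lambda>n. norm ((C (ereal (real n)) *v ap g (real n)) $ i) \<le> sqrt (c * (ap g (real n) \<bullet> (C (ereal (real n)) *v ap g (real n))))) sequentially"
    by (intro always_eventually allI bd)
  have z: "(\<lambda>n. (C (ereal (real n)) *v ap g (real n)) $ i) \<longlonglongrightarrow> 0"
    by (rule Lim_null_comparison[OF ev sq])
  have "(\<lambda>n. (C (ereal (real n)) *v ap g (real n)) $ i) \<longlonglongrightarrow> (\<integral>x. Kop H mu A g x * mu x $ i \<partial>H)"
    unfolding eq[symmetric] by (rule lim_Rs_int[OF ki])
  from LIMSEQ_unique[OF this z] show ?thesis .
qed

lemma aa_add:
  assumes g1: "L2 H g1" and g2: "L2 H g2" and K: "KV s K" and c: "c \<le> ereal s"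
  shows "aa (\<lambda>x. g1 x + g2 x) c = aa g1 c + aa g2 c"
proof -
  have "aa (\<lambda>x. g1 x + g2 x) c = (\<integral>y. indicator {y. zz y < c} y *\<^sub>R rr g1 y + indicator {y. zz y < c} y *\<^sub>R rr g2 y \<partial>H)"
    unfolding aa_def rr_def by (simp add: scaleR_add_left scaleR_add_right)
  also have "\<dots> = aa g1 c + aa g2 c"
    unfolding aa_def using aa_int[OF g1 K c] aa_int[OF g2 K c] by simp
  finally show ?thesis .
qed

lemma Kop_add_AE:
  assumes g1: "L2 H g1" and g2: "L2 H g2"
  shows "AE x in H. Kop H mu A (\<lambda>x. g1 x + g2 x) x = Kop H mu A g1 x + Kop H mu A g2 x"
  using AE_zz_ne[of \<infinity>]
proof eventually_elim
  case (elim x)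
  obtain s where s: "zz x \<le> ereal s"
  proof (cases "zz x")
    case (real r) then show ?thesis using that[of r] by simp
  next
    case MInf then show ?thesis using that[of 0] by simp
  qed (use elim in auto)
  obtain K where K: "KV s K" using KV_ex by blast
  have g12: "L2 H (\<lambda>x. g1 x + g2 x)" by (rule L2_add[OF g1 g2])
  show ?case
    unfolding Kop_TT[OF g12] Kop_TT[OF g1] Kop_TT[OF g2] TT_def aa_add[OF g1 g2 K s]
    by (simp add: inner_add_left)
qed

lemma part2_cov:
  assumes g1: "L2 H g1" and g2: "L2 H g2"
  shows "(\<integral>x. Kop H mu A g1 x * Kop H mu A g2 x \<partial>H) = (\<integral>x. g1 x * g2 x \<partial>H)"
proof -
  have g12: "L2 H (\<lambda>x. g1 x + g2 x)" by (rule L2_add[OF g1 g2])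
  have k1: "L2 H (Kop H mu A g1)" and k2: "L2 H (Kop H mu A g2)" using part1_norm g1 g2 by auto
  have [measurable]: "Kop H mu A g1 \<in> borel_measurable H" "Kop H mu A g2 \<in> borel_measurable H"
    "Kop H mu A (\<lambda>x. g1 x + g2 x) \<in> borel_measurable H"
    using Kop_meas g1 g2 g12 by auto
  have i11: "integrable H (\<lambda>x. (Kop H mu A g1 x)\<^sup>2)" and i22: "integrable H (\<lambda>x. (Kop H mu A g2 x)\<^sup>2)"
    using k1 k2 unfolding L2_def by auto
  have i12: "integrable H (\<lambda>x. Kop H mu A g1 x * Kop H mu A g2 x)" by (rule L2_int_mult[OF k1 k2])
  have j11: "integrable H (\<lambda>x. (g1 x)\<^sup>2)" and j22: "integrable H (\<lambda>x. (g2 x)\<^sup>2)"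
    using g1 g2 unfolding L2_def by auto
  have j12: "integrable H (\<lambda>x. g1 x * g2 x)" by (rule L2_int_mult[OF g1 g2])
  have "(\<integral>x. (Kop H mu A (\<lambda>x. g1 x + g2 x) x)\<^sup>2 \<partial>H) = (\<integral>x. (Kop H mu A g1 x + Kop H mu A g2 x)\<^sup>2 \<partial>H)"
    by (rule integral_cong_AE) (use Kop_add_AE[OF g1 g2] in auto)
  also have "\<dots> = (\<integral>x. (Kop H mu A g1 x)\<^sup>2 + 2 * (Kop H mu A g1 x * Kop H mu A g2 x) + (Kop H mu A g2 x)\<^sup>2 \<partial>H)"
    by (rule Bochner_Integration.integral_cong) (simp_all add: power2_sum algebra_simps)
  also have "\<dots> = (\<integral>x. (Kop H mu A g1 x)\<^sup>2 \<partial>H) + 2 * (\<integral>x. Kop H mu A g1 x * Kop H mu A g2 x \<partial>H) + (\<integral>x. (Kop H mu A g2 x)\<^sup>2 \<partial>H)"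
    using i11 i12 i22 by simp
  finally have e1: "(\<integral>x. (Kop H mu A (\<lambda>x. g1 x + g2 x) x)\<^sup>2 \<partial>H) = (\<integral>x. (g1 x)\<^sup>2 \<partial>H) + 2 * (\<integral>x. Kop H mu A g1 x * Kop H mu A g2 x \<partial>H) + (\<integral>x. (g2 x)\<^sup>2 \<partial>H)"
    using part1_norm(2)[OF g1] part1_norm(2)[OF g2] by simp
  have "(\<integral>x. (Kop H mu A (\<lambda>x. g1 x + g2 x) x)\<^sup>2 \<partial>H) = (\<integral>x. (g1 x + g2 x)\<^sup>2 \<partial>H)"
    by (rule part1_norm(2)[OF g12])
  also have "\<dots> = (\<integral>x. (g1 x)\<^sup>2 + 2 * (g1 x * g2 x) + (g2 x)\<^sup>2 \<partial>H)"
    by (rule Bochner_Integration.integral_cong) (simp_all add: power2_sum algebra_simps)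
  also have "\<dots> = (\<integral>x. (g1 x)\<^sup>2 \<partial>H) + 2 * (\<integral>x. g1 x * g2 x \<partial>H) + (\<integral>x. (g2 x)\<^sup>2 \<partial>H)"
    using j11 j12 j22 by simp
  finally show ?thesis using e1 by simp
qed

lemma gperp_Kop:
  assumes g: "L2 H g"
  shows "gperp H mu (Kop H mu A g) = Kop H mu A g"
proof -
  have k: "L2 H (Kop H mu A g)" using part1_norm(1)[OF g] .
  have [measurable]: "Kop H mu A g \<in> borel_measurable H" using Kop_meas[OF g] .
  have int: "integrable H (\<lambda>y. Kop H mu A g y *\<^sub>R mu y)"
  proof (rule int_bound[where u = "\<lambda>y. \<bar>Kop H mu A g y\<bar> * norm (mu y)"])
    show "integrable H (\<lambda>y. \<bar>Kop H mu A g y\<bar> * norm (mu y))"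
      by (rule L2_int_mult[OF L2_abs[OF k] L2_norm_mu])
  qed auto
  have z: "(\<integral>y. Kop H mu A g y *\<^sub>R mu y \<partial>H) = 0"
  proof (subst vec_eq_iff, intro allI)
    fix i
    have "(\<integral>y. Kop H mu A g y *\<^sub>R mu y \<partial>H) \<bullet> axis i 1 = (\<integral>y. (Kop H mu A g y *\<^sub>R mu y) \<bullet> axis i 1 \<partial>H)"
      by (rule integral_inner_left[symmetric]) (rule int)
    also have "\<dots> = (\<integral>y. Kop H mu A g y * mu y $ i \<partial>H)" by (simp add: inner_axis)
    also have "\<dots> = 0" by (rule part1_orth[OF g])
    finally show "(\<integral>y. Kop H mu A g y *\<^sub>R mu y \<partial>H) $ i = 0 $ i" by (simp add: inner_axis)
  qed
  show ?thesis unfolding gperp_def[abs_def] z by simp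
qed

end

theorem proposition6p1:
  fixes H :: "(real^'p) measure"
    and mu :: "real^'p \<Rightarrow> real^'q"
    and A :: "real \<Rightarrow> (real^'p) set"
    and F :: "real measure"
    and M :: "'w measure"
    and b :: "(real^'p \<Rightarrow> real) \<Rightarrow> (real \<Rightarrow> real) \<Rightarrow> 'w \<Rightarrow> real"
  assumes H_prob: "prob_space H" and H_borel: "sets H = sets borel"
    and mu_L2: "\<forall>i. L2 H (\<lambda>x. mu x $ i)"
    and Ctheta_pd: "pos_def_matrix (Ctheta H mu)"
    and scan: "scanning_family H A"
    and Cz_nonsing: "\<forall>z::real. invertible (Cz H mu A (ereal z))"
    and F_prob: "prob_space F" and F_borel: "sets F = sets borel"
    and M_prob: "prob_space M"
    and b_gauss: "centered_gaussian_process M {(g, f). L2 H g \<and> L2 F f} (\<lambda>(g, f). b g f)"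
    and b_cov: "\<forall>g1 g2 f1 f2. L2 H g1 \<longrightarrow> L2 H g2 \<longrightarrow> L2 F f1 \<longrightarrow> L2 F f2 \<longrightarrow>
                  (\<integral>w. b g1 f1 w * b g2 f2 w \<partial>M) = (\<integral>x. g1 x * g2 x \<partial>H) * (\<integral>t. f1 t * f2 t \<partial>F)"
    and b_lin1: "\<forall>g1 g2 f c1 c2. L2 H g1 \<longrightarrow> L2 H g2 \<longrightarrow> L2 F f \<longrightarrow>
                  (AE w in M. b (\<lambda>x. c1 * g1 x + c2 * g2 x) f w = c1 * b g1 f w + c2 * b g2 f w)"
    and b_lin2: "\<forall>g f1 f2 c1 c2. L2 H g \<longrightarrow> L2 F f1 \<longrightarrow> L2 F f2 \<longrightarrow>
                  (AE w in M. b g (\<lambda>t. c1 * f1 t + c2 * f2 t) w = c1 * b g f1 w + c2 * b g f2 w)"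
  shows "(\<forall>g. L2 H g \<longrightarrow>
            L2 H (Kop H mu A g) \<and>
            (\<forall>i. (\<integral>x. Kop H mu A g x * mu x $ i \<partial>H) = 0) \<and>
            (\<integral>x. (Kop H mu A g x)\<^sup>2 \<partial>H) = (\<integral>x. (g x)\<^sup>2 \<partial>H))
       \<and> (\<forall>f. L2 F f \<longrightarrow>
            (let w = (\<lambda>g. b (gperp H mu (Kop H mu A g)) f) in
              centered_gaussian_process M {g. L2 H g} w \<and>
              (\<forall>g1 g2. L2 H g1 \<longrightarrow> L2 H g2 \<longrightarrow>
                 (\<integral>v. w g1 v * w g2 v \<partial>M) = (\<integral>x. g1 x * g2 x \<partial>H) * (\<integral>t. (f t)\<^sup>2 \<partial>F))))"
proof -
  interpret kh H mu A
    by (rule kh.intro[OF H_prob H_borel mu_L2 Ctheta_pd scan Cz_nonsing])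
  have P1: "\<forall>g. L2 H g \<longrightarrow>
            L2 H (Kop H mu A g) \<and>
            (\<forall>i. (\<integral>x. Kop H mu A g x * mu x $ i \<partial>H) = 0) \<and>
            (\<integral>x. (Kop H mu A g x)\<^sup>2 \<partial>H) = (\<integral>x. (g x)\<^sup>2 \<partial>H)"
    using part1_norm part1_orth by blast
  have P2: "(let w = (\<lambda>g. b (gperp H mu (Kop H mu A g)) f) in
              centered_gaussian_process M {g. L2 H g} w \<and>
              (\<forall>g1 g2. L2 H g1 \<longrightarrow> L2 H g2 \<longrightarrow>
                 (\<integral>v. w g1 v * w g2 v \<partial>M) = (\<integral>x. g1 x * g2 x \<partial>H) * (\<integral>t. (f t)\<^sup>2 \<partial>F)))"
    if f: "L2 F f" for f
  proof -
    define w where "w = (\<lambda>g. b (gperp H mu (Kop H mu A g)) f)"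
    have wK: "w g = b (Kop H mu A g) f" if "L2 H g" for g
      using that by (simp add: w_def gperp_Kop)
    have gp: "centered_gaussian_process M {g. L2 H g} w"
      unfolding centered_gaussian_process_def
    proof (intro allI impI)
      fix S :: "(real^'p \<Rightarrow> real) set" and c :: "(real^'p \<Rightarrow> real) \<Rightarrow> real"
      assume S: "finite S" "S \<subseteq> {g. L2 H g}"
      define h where "h t = (Kop H mu A t, f)" for t
      define c' where "c' p = (\<Sum>t\<in>{t\<in>S. h t = p}. c t)" for p
      have sub: "h ` S \<subseteq> {(g, f). L2 H g \<and> L2 F f}" using S f part1_norm(1) by (auto simp: h_def)
      have "centered_gaussian_rv M (\<lambda>v. \<Sum>p\<in>h ` S. c' p * (case p of (g, f) \<Rightarrow> b g f) v)"
        using b_gauss[unfolded centered_gaussian_process_def, rule_format, OF finite_imageI[OF S(1)] sub, of c']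
        by simp
      moreover have "(\<lambda>v. \<Sum>p\<in>h ` S. c' p * (case p of (g, f) \<Rightarrow> b g f) v) = (\<lambda>v. \<Sum>t\<in>S. c t * w t v)"
      proof
        fix v
        have "(\<Sum>t\<in>S. c t * w t v) = (\<Sum>t\<in>S. c t * (case h t of (g, f) \<Rightarrow> b g f) v)"
          using S by (intro sum.cong) (auto simp: wK h_def)
        also have "\<dots> = (\<Sum>p\<in>h ` S. \<Sum>t\<in>{t\<in>S. h t = p}. c t * (case h t of (g, f) \<Rightarrow> b g f) v)"
          by (rule sum.image_gen[OF S(1)])
        also have "\<dots> = (\<Sum>p\<in>h ` S. c' p * (case p of (g, f) \<Rightarrow> b g f) v)"
          unfolding c'_def sum_distrib_right by (intro sum.cong refl) auto
        finally show "(\<Sum>p\<in>h ` S. c' p * (case p of (g, f) \<Rightarrow> b g f) v) = (\<Sum>t\<in>S. c t * w t v)" by simp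
      qed
      ultimately show "centered_gaussian_rv M (\<lambda>v. \<Sum>t\<in>S. c t * w t v)" by simp
    qed
    have cov: "\<forall>g1 g2. L2 H g1 \<longrightarrow> L2 H g2 \<longrightarrow>
                 (\<integral>v. w g1 v * w g2 v \<partial>M) = (\<integral>x. g1 x * g2 x \<partial>H) * (\<integral>t. (f t)\<^sup>2 \<partial>F)"
    proof (intro allI impI)
      fix g1 g2 assume g1: "L2 H g1" and g2: "L2 H g2"
      have "(\<integral>v. w g1 v * w g2 v \<partial>M) = (\<integral>v. b (Kop H mu A g1) f v * b (Kop H mu A g2) f v \<partial>M)"
        using wK[OF g1] wK[OF g2] by simp
      also have "\<dots> = (\<integral>x. Kop H mu A g1 x * Kop H mu A g2 x \<partial>H) * (\<integral>t. f t * f t \<partial>F)"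
        using b_cov part1_norm(1)[OF g1] part1_norm(1)[OF g2] f by blast
      also have "\<dots> = (\<integral>x. g1 x * g2 x \<partial>H) * (\<integral>t. (f t)\<^sup>2 \<partial>F)"
        using part2_cov[OF g1 g2] by (simp add: power2_eq_square)
      finally show "(\<integral>v. w g1 v * w g2 v \<partial>M) = (\<integral>x. g1 x * g2 x \<partial>H) * (\<integral>t. (f t)\<^sup>2 \<partial>F)" .
    qed
    show ?thesis using gp cov unfolding Let_def w_def by simp
  qed
  show ?thesis using P1 P2 by blast
qed


end
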